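(* Let $(S,\|\cdot\|)$ be a complete $RN$ module over $K$ with base $(\Omega,\mathcal F,P)$, let $\{T(t):t\geq0\}$ be an a.s. bounded $C_{0}$--semigroup on $S$ and $(A,D(A))$ its infinitesimal generator. Then $A$ is a densely defined module homomorphism on $S$ and satisfies (a) $\frac{dT(t)x}{dt}=AT(t)x=T(t)Ax$ for any $x\in D(A)$ (and $t\ge 0$); (b) $T(r)x-x=\int_{0}^{r}T(s)Ax\,ds=\int_{0}^{r}AT(s)x\,ds$ for any $x\in D(A)$ and real $r>0$.
   Context: $(\Omega,\mathcal F,P)$ is a probability space; $L^{0}(\mathcal F,K)$ ($K=R$ or $C$) is the algebra of equivalence classes of $K$-valued $\mathcal F$-measurable random variables, ordered a.s.; $L^{0}_{+}(\mathcal F)=\{\xi\in L^0(\mathcal F,R):\xi\ge 0\}$. An $RN$ module over $K$ with base $(\Omega,\mathcal F,P)$ is a left $L^0(\mathcal F,K)$-module $S$ with a map $\|\cdot\|:S\to L^0_+(\mathcal F)$ such that $\|\xi x\|=|\xi|\|x\|$, $\|x+y\|\le\|x\|+\|y\|$, and $\|x\|=0$ implies $x=0$; it carries the $(\varepsilon,\lambda)$-topology, in which $x_n\to x$ iff $\|x_n-x\|\to0$ in probability; completeness, density, derivatives ($\frac{d}{dt}g(t)=\lim_{h\to0}\frac{g(t+h)-g(t)}{h}$) and Riemann integrals (limits of Riemann sums) of $S$-valued functions refer to this topology. $B(S)$ is the set of continuous module homomorphisms $S\to S$, with $\|T\|=\bigwedge\{\xi\in L^0_+(\mathcal F):\|Tx\|\le\xi\|x\|\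 \forall x\}$. A $C_0$--semigroup is $\{T(t):t\ge0\}\subset B(S)$ with $T(0)=I$, $T(s)T(t)=T(s+t)$, $\lim_{t\downarrow0}T(t)x=x$ for all $x$. It is a.s. bounded if there is a real $L>0$ with $\bigvee_{t\in[0,L]}\|T(t)\|\in L^0_+(\mathcal F)$. Its infinitesimal generator is $Ax=\lim_{t\downarrow0}\frac{T(t)x-x}{t}$ on $D(A)=\{x:\text{the limit exists}\}$. *)

theory Defs
  imports "HOL-Probability.Probability"
begin

text \<open>
Elements of L0(F,K) are represented by
their M-measurable representatives ('w => 'k); equalities/inequalities between elements of
L0 are read almost everywhere.  The RN module S is the carrier type 'a (an abelian group),
with the L0-action sm and the L0-valued norm nr (nr x is a representative of ||x||).
The scalar field K is a type 'k of class real_normed_field (up to isomorphism exactly R or C).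
\<close>

definition ae_eq :: "'w measure \<Rightarrow> ('w \<Rightarrow> 'b) \<Rightarrow> ('w \<Rightarrow> 'b) \<Rightarrow> bool" where
  "ae_eq M f g \<longleftrightarrow> (AE w in M. f w = g w)"

definition L0 :: "'w measure \<Rightarrow> ('w \<Rightarrow> 'k::real_normed_field) set" where
  "L0 M = borel_measurable M"

definition rsc :: "real \<Rightarrow> 'w \<Rightarrow> 'k::real_normed_field" where
  "rsc c = (\<lambda>w. of_real c)"

definition rn_module ::
  "'w measure \<Rightarrow> (('w \<Rightarrow> 'k::real_normed_field) \<Rightarrow> 'a::ab_group_add \<Rightarrow> 'a) \<Rightarrow> ('a \<Rightarrow> 'w \<Rightarrow> real) \<Rightarrow> bool"
where
  "rn_module M sm nr \<longleftrightarrow> prob_space M \<and>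
     (\<forall>\<xi>\<in>L0 M. \<forall>\<eta>\<in>L0 M. \<forall>x. ae_eq M \<xi> \<eta> \<longrightarrow> sm \<xi> x = sm \<eta> x) \<and>
     (\<forall>\<xi>\<in>L0 M. \<forall>\<eta>\<in>L0 M. \<forall>x. sm (\<lambda>w. \<xi> w + \<eta> w) x = sm \<xi> x + sm \<eta> x) \<and>
     (\<forall>\<xi>\<in>L0 M. \<forall>x y. sm \<xi> (x + y) = sm \<xi> x + sm \<xi> y) \<and>
     (\<forall>\<xi>\<in>L0 M. \<forall>\<eta>\<in>L0 M. \<forall>x. sm (\<lambda>w. \<xi> w * \<eta> w) x = sm \<xi> (sm \<eta> x)) \<and>
     (\<forall>x. sm (\<lambda>w. 1) x = x) \<and>
     (\<forall>x. nr x \<in> borel_measurable M \<and> (AE w in M. 0 \<le> nr x w)) \<and>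
     (\<forall>\<xi>\<in>L0 M. \<forall>x. AE w in M. nr (sm \<xi> x) w = norm (\<xi> w) * nr x w) \<and>
     (\<forall>x y. AE w in M. nr (x + y) w \<le> nr x w + nr y w) \<and>
     (\<forall>x. (AE w in M. nr x w = 0) \<longrightarrow> x = 0)"

text \<open>Convergence in the (epsilon,lambda)-topology along a filter:
  ||f i - x|| tends to 0 in probability.\<close>
definition rn_tendsto ::
  "'w measure \<Rightarrow> ('a::ab_group_add \<Rightarrow> 'w \<Rightarrow> real) \<Rightarrow> ('i \<Rightarrow> 'a) \<Rightarrow> 'a \<Rightarrow> 'i filter \<Rightarrow> bool" where
  "rn_tendsto M nr f x F \<longleftrightarrow>
     (\<forall>\<epsilon>>0. ((\<lambda>i. measure M {w\<in>space M. \<epsilon> \<le> nr (f i - x) w}) \<longlongrightarrow> 0) F)"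

definition rn_complete :: "'w measure \<Rightarrow> ('a::ab_group_add \<Rightarrow> 'w \<Rightarrow> real) \<Rightarrow> bool" where
  "rn_complete M nr \<longleftrightarrow>
     (\<forall>X::nat \<Rightarrow> 'a.
        (\<forall>\<epsilon>>0. \<forall>lam>0. \<exists>N. \<forall>m\<ge>N. \<forall>n\<ge>N.
            measure M {w\<in>space M. \<epsilon> \<le> nr (X m - X n) w} < lam)
        \<longrightarrow> (\<exists>x. rn_tendsto M nr X x sequentially))"

text \<open>D is dense: every basic (epsilon,lambda)-neighbourhood
  U(x,eps,lam) = {y. P{||y - x|| < eps} > 1 - lam} meets D.\<close>
definition rn_dense :: "'w measure \<Rightarrow> ('a::ab_group_add \<Rightarrow> 'w \<Rightarrow> real) \<Rightarrow> 'a set \<Rightarrow> bool" where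
  "rn_dense M nr D \<longleftrightarrow>
     (\<forall>x. \<forall>\<epsilon>>0. \<forall>lam>0. \<exists>y\<in>D. measure M {w\<in>space M. nr (y - x) w < \<epsilon>} > 1 - lam)"

definition rn_continuous :: "'w measure \<Rightarrow> ('a::ab_group_add \<Rightarrow> 'w \<Rightarrow> real) \<Rightarrow> ('a \<Rightarrow> 'a) \<Rightarrow> bool" where
  "rn_continuous M nr f \<longleftrightarrow>
     (\<forall>x. \<forall>\<epsilon>>0. \<forall>lam>0. \<exists>\<delta>>0. \<exists>\<eta>>0. \<forall>y.
        measure M {w\<in>space M. nr (y - x) w < \<delta>} > 1 - \<eta> \<longrightarrow>
        measure M {w\<in>space M. nr (f y - f x) w < \<epsilon>} > 1 - lam)"

definition module_hom_on ::
  "'w measure \<Rightarrow> (('w \<Rightarrow> 'k::real_normed_field) \<Rightarrow> 'a::ab_group_add \<Rightarrow> 'a) \<Rightarrow> 'a set \<Rightarrow> ('a \<Rightarrow> 'a) \<Rightarrow> bool"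
where
  "module_hom_on M sm D f \<longleftrightarrow>
     (\<forall>x\<in>D. \<forall>y\<in>D. f (x + y) = f x + f y) \<and>
     (\<forall>\<xi>\<in>L0 M. \<forall>x\<in>D. f (sm \<xi> x) = sm \<xi> (f x))"

definition submodule ::
  "'w measure \<Rightarrow> (('w \<Rightarrow> 'k::real_normed_field) \<Rightarrow> 'a::ab_group_add \<Rightarrow> 'a) \<Rightarrow> 'a set \<Rightarrow> bool"
where
  "submodule M sm D \<longleftrightarrow> 0 \<in> D \<and> (\<forall>x\<in>D. \<forall>y\<in>D. x + y \<in> D) \<and>
     (\<forall>\<xi>\<in>L0 M. \<forall>x\<in>D. sm \<xi> x \<in> D)"

definition in_BS ::
  "'w measure \<Rightarrow> (('w \<Rightarrow> 'k::real_normed_field) \<Rightarrow> 'a::ab_group_add \<Rightarrow> 'a) \<Rightarrow> ('a \<Rightarrow> 'w \<Rightarrow> real) \<Rightarrow> ('a \<Rightarrow> 'a) \<Rightarrow> bool"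
where
  "in_BS M sm nr f \<longleftrightarrow> module_hom_on M sm UNIV f \<and> rn_continuous M nr f"

definition C0_semigroup ::
  "'w measure \<Rightarrow> (('w \<Rightarrow> 'k::real_normed_field) \<Rightarrow> 'a::ab_group_add \<Rightarrow> 'a) \<Rightarrow> ('a \<Rightarrow> 'w \<Rightarrow> real)
    \<Rightarrow> (real \<Rightarrow> 'a \<Rightarrow> 'a) \<Rightarrow> bool"
where
  "C0_semigroup M sm nr T \<longleftrightarrow>
     (\<forall>t\<ge>0. in_BS M sm nr (T t)) \<and> T 0 = id \<and>
     (\<forall>s\<ge>0. \<forall>t\<ge>0. T s \<circ> T t = T (s + t)) \<and>
     (\<forall>x. rn_tendsto M nr (\<lambda>t. T t x) x (at_right 0))"

text \<open>a.s. bounded: for some real L > 0 the family {||T(t)|| : t in [0,L]} has an upper bound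
  in L0_+(F), i.e. there is a finite nonnegative xi with ||T(t)x|| <= xi ||x|| a.s.
  for all x and all t in [0,L] (equivalently: its supremum lies in L0_+(F)).\<close>
definition as_bounded :: "'w measure \<Rightarrow> ('a \<Rightarrow> 'w \<Rightarrow> real) \<Rightarrow> (real \<Rightarrow> 'a \<Rightarrow> 'a) \<Rightarrow> bool" where
  "as_bounded M nr T \<longleftrightarrow>
     (\<exists>L>0. \<exists>\<xi>\<in>borel_measurable M. (AE w in M. 0 \<le> \<xi> w) \<and>
        (\<forall>t\<in>{0..L}. \<forall>x. AE w in M. nr (T t x) w \<le> \<xi> w * nr x w))"

definition gen_domain ::
  "'w measure \<Rightarrow> (('w \<Rightarrow> 'k::real_normed_field) \<Rightarrow> 'a::ab_group_add \<Rightarrow> 'a) \<Rightarrow> ('a \<Rightarrow> 'w \<Rightarrow> real)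
    \<Rightarrow> (real \<Rightarrow> 'a \<Rightarrow> 'a) \<Rightarrow> 'a set"
where
  "gen_domain M sm nr T =
     {x. \<exists>y. rn_tendsto M nr (\<lambda>t. sm (rsc (1 / t)) (T t x - x)) y (at_right 0)}"

definition is_generator ::
  "'w measure \<Rightarrow> (('w \<Rightarrow> 'k::real_normed_field) \<Rightarrow> 'a::ab_group_add \<Rightarrow> 'a) \<Rightarrow> ('a \<Rightarrow> 'w \<Rightarrow> real)
    \<Rightarrow> (real \<Rightarrow> 'a \<Rightarrow> 'a) \<Rightarrow> ('a \<Rightarrow> 'a) \<Rightarrow> bool"
where
  "is_generator M sm nr T A \<longleftrightarrow>
     (\<forall>x\<in>gen_domain M sm nr T.
        rn_tendsto M nr (\<lambda>t. sm (rsc (1 / t)) (T t x - x)) (A x) (at_right 0))"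

text \<open>Derivative of g at t relative to the parameter set I (two-sided where possible,
  one-sided at boundary points): lim_{h->0, t+h in I} (g(t+h) - g t)/h = v.\<close>
definition rn_has_deriv ::
  "'w measure \<Rightarrow> (('w \<Rightarrow> 'k::real_normed_field) \<Rightarrow> 'a::ab_group_add \<Rightarrow> 'a) \<Rightarrow> ('a \<Rightarrow> 'w \<Rightarrow> real)
    \<Rightarrow> (real \<Rightarrow> 'a) \<Rightarrow> 'a \<Rightarrow> real \<Rightarrow> real set \<Rightarrow> bool"
where
  "rn_has_deriv M sm nr g v t I \<longleftrightarrow>
     rn_tendsto M nr (\<lambda>h. sm (rsc (1 / h)) (g (t + h) - g t)) v (at 0 within {h. t + h \<in> I})"

definition rn_has_integral ::
  "'w measure \<Rightarrow> (('w \<Rightarrow> 'k::real_normed_field) \<Rightarrow> 'a::ab_group_add \<Rightarrow> 'a) \<Rightarrow> ('a \<Rightarrow> 'w \<Rightarrow> real)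
    \<Rightarrow> (real \<Rightarrow> 'a) \<Rightarrow> real \<Rightarrow> real \<Rightarrow> 'a \<Rightarrow> bool"
where
  "rn_has_integral M sm nr g a b I \<longleftrightarrow>
     (\<forall>\<epsilon>>0. \<forall>lam>0. \<exists>\<delta>>0. \<forall>(n::nat) (s::nat \<Rightarrow> real) (\<tau>::nat \<Rightarrow> real).
        (s 0 = a \<and> s n = b \<and>
         (\<forall>i<n. s i < s (Suc i) \<and> s i \<le> \<tau> i \<and> \<tau> i \<le> s (Suc i) \<and> s (Suc i) - s i < \<delta>))
        \<longrightarrow> measure M {w\<in>space M.
              \<epsilon> \<le> nr ((\<Sum>i<n. sm (rsc (s (Suc i) - s i)) (g (\<tau> i))) - I) w} < lam)"

end

theory Submission
  imports Defs
begin


locale sg =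
  fixes M :: "'w measure"
    and sm :: "('w \<Rightarrow> 'k::real_normed_field) \<Rightarrow> 'a::ab_group_add \<Rightarrow> 'a"
    and nr :: "'a \<Rightarrow> 'w \<Rightarrow> real"
    and T :: "real \<Rightarrow> 'a \<Rightarrow> 'a"
    and A :: "'a \<Rightarrow> 'a"
  assumes rn: "rn_module M sm nr"
    and cpl: "rn_complete M nr"
    and C0: "C0_semigroup M sm nr T"
    and asb: "as_bounded M nr T"
    and gen: "is_generator M sm nr T A"

sublocale sg \<subseteq> prob_space M
  using sg.rn rn_module_def sg_axioms by blast

context sg begin

abbreviation Pm :: "real \<Rightarrow> 'a \<Rightarrow> real" where
  "Pm e z \<equiv> measure M {w\<in>space M. e \<le> nr z w}"

lemma nr_meas[measurable]: "nr x \<in> borel_measurable M"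
  using rn unfolding rn_module_def by simp

lemma nr_nonneg: "AE w in M. 0 \<le> nr x w"
  using rn unfolding rn_module_def by simp

lemma rsc_L0[simp]: "rsc c \<in> L0 M"
  unfolding L0_def rsc_def by simp

lemma sm_add: "\<xi> \<in> L0 M \<Longrightarrow> sm \<xi> (x + y) = sm \<xi> x + sm \<xi> y"
  using rn unfolding rn_module_def by simp

lemma sm_zero: "\<xi> \<in> L0 M \<Longrightarrow> sm \<xi> 0 = 0"
  using sm_add[of \<xi> 0 0] by simp

lemma sm_minus: "\<xi> \<in> L0 M \<Longrightarrow> sm \<xi> (- x) = - sm \<xi> x"
  using sm_add[of \<xi> x "-x"] sm_zero[of \<xi>] by (simp add: eq_neg_iff_add_eq_0 add.commute)

lemma sm_diff: "\<xi> \<in> L0 M \<Longrightarrow> sm \<xi> (x - y) = sm \<xi> x - sm \<xi> y"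
  using sm_add[of \<xi> x "-y"] sm_minus[of \<xi> y] by simp

lemma sm_sum: "\<xi> \<in> L0 M \<Longrightarrow> sm \<xi> (\<Sum>i\<in>I. f i) = (\<Sum>i\<in>I. sm \<xi> (f i))"
  by (induction I rule: infinite_finite_induct) (auto simp: sm_zero sm_add)

lemma sm_mult: "\<xi> \<in> L0 M \<Longrightarrow> \<eta> \<in> L0 M \<Longrightarrow> sm (\<lambda>w. \<xi> w * \<eta> w) x = sm \<xi> (sm \<eta> x)"
  using rn unfolding rn_module_def by simp

lemma sm_addsc: "\<xi> \<in> L0 M \<Longrightarrow> \<eta> \<in> L0 M \<Longrightarrow> sm (\<lambda>w. \<xi> w + \<eta> w) x = sm \<xi> x + sm \<eta> x"
  using rn unfolding rn_module_def by simp

lemma rsc_mult: "sm (rsc a) (sm (rsc b) x) = sm (rsc (a * b)) x"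
proof -
  have "sm (rsc a) (sm (rsc b) x) = sm (\<lambda>w. rsc a w * rsc b w) x" by (rule sm_mult[symmetric]) simp_all
  also have "(\<lambda>w. rsc a w * rsc b w) = rsc (a * b)" unfolding rsc_def by simp
  finally show ?thesis .
qed

lemma rsc_add: "sm (rsc (a + b)) x = sm (rsc a) x + sm (rsc b) x"
proof -
  have "sm (rsc a) x + sm (rsc b) x = sm (\<lambda>w. rsc a w + rsc b w) x" by (rule sm_addsc[symmetric]) simp_all
  also have "(\<lambda>w. rsc a w + rsc b w) = rsc (a + b)" unfolding rsc_def by simp
  finally show ?thesis by simp
qed

lemma rsc_one[simp]: "sm (rsc 1) x = x"
proof -
  have "(rsc 1 :: 'w \<Rightarrow> 'k) = (\<lambda>w. 1)" unfolding rsc_def by simp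
  moreover have "sm (\<lambda>w. 1) x = x" using rn unfolding rn_module_def by simp
  ultimately show ?thesis by metis
qed

lemma rsc_zero[simp]: "sm (rsc 0) x = 0"
  using rsc_add[of 0 0 x] by simp

lemma rsc_neg: "sm (rsc (- a)) x = - sm (rsc a) x"
  using rsc_add[of a "-a" x] by (simp add: eq_neg_iff_add_eq_0 add.commute)

lemma rsc_sum: "sm (rsc (\<Sum>i\<in>I. c i)) x = (\<Sum>i\<in>I. sm (rsc (c i)) x)"
  by (induction I rule: infinite_finite_induct) (auto simp: rsc_add)

lemma neg_eq_rsc: "- x = sm (rsc (-1)) x"
  using rsc_neg[of 1 x] by simp

lemma sm_comm: "\<xi> \<in> L0 M \<Longrightarrow> sm \<xi> (sm (rsc c) x) = sm (rsc c) (sm \<xi> x)"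
proof -
  assume a: "\<xi> \<in> L0 M"
  have "(\<lambda>w. \<xi> w * rsc c w) = (\<lambda>w. rsc c w * \<xi> w)" by (simp add: mult.commute)
  then show ?thesis using sm_mult[OF a rsc_L0, of c x] sm_mult[OF rsc_L0 a, of c x] by simp
qed

lemma nr_sm: "\<xi> \<in> L0 M \<Longrightarrow> AE w in M. nr (sm \<xi> x) w = norm (\<xi> w) * nr x w"
  using rn unfolding rn_module_def by simp

lemma nr_rsc: "AE w in M. nr (sm (rsc c) x) w = \<bar>c\<bar> * nr x w"
  using nr_sm[OF rsc_L0, of c x] unfolding rsc_def by simp

lemma nr_tri: "AE w in M. nr (x + y) w \<le> nr x w + nr y w"
  using rn unfolding rn_module_def by simp

lemma nr_zero_eq: "AE w in M. nr x w = 0 \<Longrightarrow> x = 0"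
  using rn unfolding rn_module_def by simp

lemma nr_neg: "AE w in M. nr (- x) w = nr x w"
  using nr_rsc[of "-1" x] by (simp add: neg_eq_rsc[symmetric])

lemma nr_zero: "AE w in M. nr 0 w = 0"
  using nr_rsc[of 0 0] by simp

lemma nr_comm: "AE w in M. nr (x - y) w = nr (y - x) w"
  using nr_neg[of "y - x"] by simp

lemma nr_tri_diff: "AE w in M. nr (x - z) w \<le> nr (x - y) w + nr (y - z) w"
  using nr_tri[of "x - y" "y - z"] by simp

lemma nr_sum: "finite I \<Longrightarrow> AE w in M. nr (\<Sum>i\<in>I. f i) w \<le> (\<Sum>i\<in>I. nr (f i) w)"
proof (induction I rule: finite_induct)
  case empty
  then show ?case using nr_zero by eventually_elim simp
next
  case (insert a F)
  from insert.IH nr_tri[of "f a" "sum f F"]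
  have "AE w in M. nr (f a + sum f F) w \<le> nr (f a) w + (\<Sum>i\<in>F. nr (f i) w)"
    by eventually_elim linarith
  then show ?case using insert.hyps by simp
qed

lemma nr_sum_sm: "finite I \<Longrightarrow>
   AE w in M. nr (\<Sum>i\<in>I. sm (rsc (c i)) (f i)) w \<le> (\<Sum>i\<in>I. \<bar>c i\<bar> * nr (f i) w)"
proof -
  assume fI: "finite I"
  have "AE w in M. \<forall>i\<in>I. nr (sm (rsc (c i)) (f i)) w = \<bar>c i\<bar> * nr (f i) w"
    using fI nr_rsc by (simp add: AE_finite_all)
  with nr_sum[OF fI, of "\<lambda>i. sm (rsc (c i)) (f i)"] show ?thesis
  proof eventually_elim
    case (elim w)
    then have "(\<Sum>i\<in>I. nr (sm (rsc (c i)) (f i)) w) = (\<Sum>i\<in>I. \<bar>c i\<bar> * nr (f i) w)"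
      by (intro sum.cong) auto
    with elim show ?case by simp
  qed
qed

lemma meas_le2:
  assumes "AE w in M. P w \<longrightarrow> Q1 w \<or> Q2 w"
    and "{w\<in>space M. Q1 w} \<in> sets M" "{w\<in>space M. Q2 w} \<in> sets M"
  shows "measure M {w\<in>space M. P w} \<le> measure M {w\<in>space M. Q1 w} + measure M {w\<in>space M. Q2 w}"
proof -
  have "measure M {w\<in>space M. P w} \<le> measure M ({w\<in>space M. Q1 w} \<union> {w\<in>space M. Q2 w})"
  proof (rule finite_measure_mono_AE)
    show "AE x in M. x \<in> {w \<in> space M. P w} \<longrightarrow> x \<in> {w \<in> space M. Q1 w} \<union> {w \<in> space M. Q2 w}"
      using assms(1) by eventually_elim blast
    show "{w \<in> space M. Q1 w} \<union> {w \<in> space M. Q2 w} \<in> sets M" using assms(2,3) by blast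
  qed
  also have "\<dots> \<le> measure M {w\<in>space M. Q1 w} + measure M {w\<in>space M. Q2 w}"
    using assms(2,3) by (rule measure_Un_le)
  finally show ?thesis .
qed

lemma meas_le1:
  assumes "AE w in M. P w \<longrightarrow> Q1 w"
    and "{w\<in>space M. Q1 w} \<in> sets M"
  shows "measure M {w\<in>space M. P w} \<le> measure M {w\<in>space M. Q1 w}"
proof (rule finite_measure_mono_AE)
  show "AE x in M. x \<in> {w \<in> space M. P w} \<longrightarrow> x \<in> {w \<in> space M. Q1 w}"
    using assms(1) by eventually_elim blast
qed (rule assms(2))

lemma tri_meas: "Pm e (x - z) \<le> Pm (e/2) (x - y) + Pm (e/2) (y - z)"
proof (rule meas_le2)
  show "AE w in M. e \<le> nr (x - z) w \<longrightarrow> e / 2 \<le> nr (x - y) w \<or> e / 2 \<le> nr (y - z) w"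
    using nr_tri_diff[of x z y] by eventually_elim linarith
qed simp_all

end


context sg begin

lemma Pm_nonneg: "0 \<le> Pm e z" by (rule measure_nonneg)

lemma rn_tendsto_iff:
  "rn_tendsto M nr f x F \<longleftrightarrow> (\<forall>e>0. \<forall>l>0. eventually (\<lambda>i. Pm e (f i - x) < l) F)"
  unfolding rn_tendsto_def tendsto_iff dist_real_def by (simp add: Pm_nonneg)

lemma rn_tendstoI:
  "(\<And>e l. e > 0 \<Longrightarrow> l > 0 \<Longrightarrow> eventually (\<lambda>i. Pm e (f i - x) < l) F) \<Longrightarrow> rn_tendsto M nr f x F"
  unfolding rn_tendsto_iff by blast

lemma rn_tendstoD:
  "rn_tendsto M nr f x F \<Longrightarrow> e > 0 \<Longrightarrow> l > 0 \<Longrightarrow> eventually (\<lambda>i. Pm e (f i - x) < l) F"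
  unfolding rn_tendsto_iff by blast

lemma Pm_mono: "e \<le> e' \<Longrightarrow> Pm e' z \<le> Pm e z"
  by (rule meas_le1) auto

lemma nr_diff_le: "AE w in M. nr (a - b) w \<le> nr a w + nr b w"
  using nr_tri[of a "-b"] nr_neg[of b] by eventually_elim simp

lemma nr_add_le: "AE w in M. nr (a + b) w \<le> nr a w + nr b w"
  by (rule nr_tri)

lemma rn_tendsto_diff:
  assumes "rn_tendsto M nr f x F" "rn_tendsto M nr g y F"
  shows "rn_tendsto M nr (\<lambda>i. f i - g i) (x - y) F"
proof (rule rn_tendstoI)
  fix e l :: real assume el: "e > 0" "l > 0"
  have "eventually (\<lambda>i. Pm (e/2) (f i - x) < l/2) F" using assms(1) el by (intro rn_tendstoD) auto
  moreover have "eventually (\<lambda>i. Pm (e/2) (g i - y) < l/2) F" using assms(2) el by (intro rn_tendstoD) auto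
  ultimately show "eventually (\<lambda>i. Pm e ((f i - g i) - (x - y)) < l) F"
  proof eventually_elim
    case (elim i)
    have "Pm e ((f i - g i) - (x - y)) \<le> Pm (e/2) (f i - x) + Pm (e/2) (g i - y)"
    proof (rule meas_le2)
      have eq: "(f i - g i) - (x - y) = (f i - x) - (g i - y)" by (simp add: algebra_simps)
      show "AE w in M. e \<le> nr (f i - g i - (x - y)) w \<longrightarrow> e / 2 \<le> nr (f i - x) w \<or> e / 2 \<le> nr (g i - y) w"
        using nr_diff_le[of "f i - x" "g i - y"] unfolding eq by eventually_elim linarith
    qed simp_all
    with elim show ?case by linarith
  qed
qed

lemma rn_tendsto_add:
  assumes "rn_tendsto M nr f x F" "rn_tendsto M nr g y F"
  shows "rn_tendsto M nr (\<lambda>i. f i + g i) (x + y) F"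
proof (rule rn_tendstoI)
  fix e l :: real assume el: "e > 0" "l > 0"
  have "eventually (\<lambda>i. Pm (e/2) (f i - x) < l/2) F" using assms(1) el by (intro rn_tendstoD) auto
  moreover have "eventually (\<lambda>i. Pm (e/2) (g i - y) < l/2) F" using assms(2) el by (intro rn_tendstoD) auto
  ultimately show "eventually (\<lambda>i. Pm e ((f i + g i) - (x + y)) < l) F"
  proof eventually_elim
    case (elim i)
    have "Pm e ((f i + g i) - (x + y)) \<le> Pm (e/2) (f i - x) + Pm (e/2) (g i - y)"
    proof (rule meas_le2)
      have eq: "(f i + g i) - (x + y) = (f i - x) + (g i - y)" by (simp add: algebra_simps)
      show "AE w in M. e \<le> nr (f i + g i - (x + y)) w \<longrightarrow> e / 2 \<le> nr (f i - x) w \<or> e / 2 \<le> nr (g i - y) w"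
        using nr_add_le[of "f i - x" "g i - y"] unfolding eq by eventually_elim linarith
    qed simp_all
    with elim show ?case by linarith
  qed
qed

lemma rn_tendsto_cong:
  assumes "rn_tendsto M nr f x F" "eventually (\<lambda>i. f i = g i) F"
  shows "rn_tendsto M nr g x F"
proof (rule rn_tendstoI)
  fix e l :: real assume "e > 0" "l > 0"
  with assms(1) have "eventually (\<lambda>i. Pm e (f i - x) < l) F" by (rule rn_tendstoD)
  with assms(2) show "eventually (\<lambda>i. Pm e (g i - x) < l) F" by eventually_elim simp
qed

lemma rn_tendsto_const: "rn_tendsto M nr (\<lambda>i. x) x F"
proof (rule rn_tendstoI)
  fix e l :: real assume el: "e > 0" "l > 0"
  have "Pm e (x - x) \<le> measure M {w\<in>space M. False}"
    by (rule meas_le1) (use nr_zero el in \<open>auto elim!: AE_mp\<close>)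
  then have "Pm e (x - x) = 0" using Pm_nonneg[of e 0] by simp
  then show "eventually (\<lambda>i. Pm e (x - x) < l) F" using el by simp
qed

lemma small_eq_zero:
  assumes "\<And>e l. e > 0 \<Longrightarrow> l > 0 \<Longrightarrow> Pm e z < l"
  shows "z = 0"
proof (rule nr_zero_eq)
  have P0: "Pm e z = 0" if "e > 0" for e
  proof -
    have "Pm e z \<le> l" if "l > 0" for l using assms[of e l] \<open>e > 0\<close> that by simp
    then have "Pm e z \<le> 0" by (meson dense not_le)
    then show ?thesis using Pm_nonneg[of e z] by simp
  qed
  have "AE w in M. nr z w < 1 / real (Suc n)" for n
  proof -
    have "AE w in M. \<not> (1 / real (Suc n) \<le> nr z w)"
      by (rule AE_I[where N="{w\<in>space M. 1 / real (Suc n) \<le> nr z w}"])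
         (auto simp: emeasure_eq_measure P0)
    then show ?thesis by eventually_elim simp
  qed
  then have "AE w in M. \<forall>n. nr z w < 1 / real (Suc n)" by (simp add: AE_all_countable)
  then have "AE w in M. nr z w \<le> 0"
  proof eventually_elim
    case (elim w)
    show ?case
    proof (rule ccontr)
      assume "\<not> nr z w \<le> 0"
      then obtain n where "1 / real (Suc n) < nr z w" using nat_approx_posE by (metis not_le)
      with elim show False by (meson less_asym)
    qed
  qed
  with nr_nonneg[of z] show "AE w in M. nr z w = 0" by eventually_elim simp
qed

lemma rn_tendsto_unique:
  assumes "F \<noteq> bot" "rn_tendsto M nr f x F" "rn_tendsto M nr f y F"
  shows "x = y"
proof -
  have "x - y = 0"
  proof (rule small_eq_zero)
    fix e l :: real assume el: "e > 0" "l > 0"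
    have "eventually (\<lambda>i. Pm (e/2) (f i - x) < l/2) F" using assms(2) el by (intro rn_tendstoD) auto
    moreover have "eventually (\<lambda>i. Pm (e/2) (f i - y) < l/2) F" using assms(3) el by (intro rn_tendstoD) auto
    ultimately have "eventually (\<lambda>i. Pm e (x - y) < l) F"
    proof eventually_elim
      case (elim i)
      have "Pm e (x - y) \<le> Pm (e/2) (x - f i) + Pm (e/2) (f i - y)" by (rule tri_meas)
      moreover have "Pm (e/2) (x - f i) = Pm (e/2) (f i - x)"
        by (rule finite_measure_eq_AE) (use nr_comm[of x "f i"] in \<open>auto elim!: AE_mp\<close>)
      ultimately show ?case using elim by linarith
    qed
    then show "Pm e (x - y) < l" using assms(1) by (simp add: eventually_const_iff)
  qed
  then show ?thesis by simp
qed

end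


context sg begin

lemma T_BS: "t \<ge> 0 \<Longrightarrow> in_BS M sm nr (T t)"
  using C0 unfolding C0_semigroup_def by simp

lemma T0[simp]: "T 0 x = x"
  using C0 unfolding C0_semigroup_def by simp

lemma T_semi: "s \<ge> 0 \<Longrightarrow> t \<ge> 0 \<Longrightarrow> T s (T t x) = T (s + t) x"
proof -
  assume "s \<ge> 0" "t \<ge> 0"
  then have "T s \<circ> T t = T (s + t)" using C0 unfolding C0_semigroup_def by simp
  then show ?thesis by (metis comp_apply)
qed

lemma T_comm: "s \<ge> 0 \<Longrightarrow> t \<ge> 0 \<Longrightarrow> T s (T t x) = T t (T s x)"
  by (simp add: T_semi add.commute)

lemma C0_lim: "rn_tendsto M nr (\<lambda>t. T t x) x (at_right 0)"
  using C0 unfolding C0_semigroup_def by simp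

lemma T_add: "t \<ge> 0 \<Longrightarrow> T t (x + y) = T t x + T t y"
  using T_BS[of t] unfolding in_BS_def module_hom_on_def by simp

lemma T_sm: "t \<ge> 0 \<Longrightarrow> \<xi> \<in> L0 M \<Longrightarrow> T t (sm \<xi> x) = sm \<xi> (T t x)"
  using T_BS[of t] unfolding in_BS_def module_hom_on_def by simp

lemma T_rsc: "t \<ge> 0 \<Longrightarrow> T t (sm (rsc c) x) = sm (rsc c) (T t x)"
  by (simp add: T_sm)

lemma T_zero: "t \<ge> 0 \<Longrightarrow> T t 0 = 0"
  using T_add[of t 0 0] by simp

lemma T_minus: "t \<ge> 0 \<Longrightarrow> T t (- x) = - T t x"
  using T_add[of t x "-x"] T_zero[of t] by (simp add: eq_neg_iff_add_eq_0 add.commute)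

lemma T_diff: "t \<ge> 0 \<Longrightarrow> T t (x - y) = T t x - T t y"
  using T_add[of t x "-y"] T_minus[of t y] by simp

lemma T_sum: "t \<ge> 0 \<Longrightarrow> T t (\<Sum>i\<in>I. f i) = (\<Sum>i\<in>I. T t (f i))"
  by (induction I rule: infinite_finite_induct) (auto simp: T_zero T_add)

lemma big_small:
  fixes \<xi> :: "'w \<Rightarrow> real"
  assumes [measurable]: "\<xi> \<in> borel_measurable M" and l: "l > 0"
  shows "\<exists>C>0. measure M {w\<in>space M. C \<le> \<xi> w} < l"
proof -
  define B where "B n = {w\<in>space M. real n \<le> \<xi> w}" for n
  have "(\<lambda>n. measure M (B n)) \<longlonglongrightarrow> measure M (\<Inter> (range B))"
  proof (rule finite_Lim_measure_decseq)
    show "range B \<subseteq> sets M" unfolding B_def by auto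
    show "antimono_on UNIV B" unfolding B_def by (auto simp: monotone_on_def)
  qed
  moreover have "\<Inter> (range B) = {}"
  proof (safe)
    fix w assume "w \<in> \<Inter> (range B)"
    moreover obtain n where "\<xi> w < real n" using reals_Archimedean2 by blast
    ultimately show "w \<in> {}" unfolding B_def by (auto simp: not_le[symmetric])
  qed
  ultimately have "(\<lambda>n. measure M (B n)) \<longlonglongrightarrow> 0" by simp
  then have "eventually (\<lambda>n. measure M (B n) < l) sequentially" using l by (rule order_tendstoD)
  then obtain N where "\<forall>n\<ge>N. measure M (B n) < l" unfolding eventually_sequentially by blast
  then have "measure M (B (Suc N)) < l" by simp
  then show ?thesis unfolding B_def by (intro exI[of _ "real (Suc N)"]) auto
qed

lemma prod_bound:
  fixes \<xi> Y :: "'w \<Rightarrow> real"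
  assumes [measurable]: "\<xi> \<in> borel_measurable M" "Y \<in> borel_measurable M"
    and nn: "AE w in M. 0 \<le> \<xi> w" and C: "C > 0" and e: "e > 0"
  shows "measure M {w\<in>space M. e \<le> \<xi> w * Y w}
     \<le> measure M {w\<in>space M. C \<le> \<xi> w} + measure M {w\<in>space M. e / C \<le> Y w}"
proof (rule meas_le2)
  show "AE w in M. e \<le> \<xi> w * Y w \<longrightarrow> C \<le> \<xi> w \<or> e / C \<le> Y w"
    using nn
  proof eventually_elim
    case (elim w)
    show ?case
    proof (rule ccontr)
      assume "\<not> (e \<le> \<xi> w * Y w \<longrightarrow> C \<le> \<xi> w \<or> e / C \<le> Y w)"
      then have h: "e \<le> \<xi> w * Y w" "\<xi> w < C" "Y w < e / C" by (auto simp: not_le)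
      show False
      proof (cases "Y w \<le> 0")
        case True
        then have "\<xi> w * Y w \<le> 0" using elim by (simp add: mult_nonneg_nonpos)
        then show False using h e by linarith
      next
        case False
        then have "\<xi> w * Y w \<le> C * Y w" using h by (intro mult_right_mono) auto
        also have "C * Y w < C * (e / C)" using h C by (intro mult_strict_left_mono) auto
        also have "\<dots> = e" using C by simp
        finally show False using h by linarith
      qed
    qed
  qed
qed simp_all

lemma Tbound:
  "\<exists>\<Xi>\<in>borel_measurable M. (AE w in M. 1 \<le> \<Xi> w) \<and>
      (\<forall>t\<in>{0..B}. \<forall>x. AE w in M. nr (T t x) w \<le> \<Xi> w * nr x w)"
proof -
  obtain L \<xi> where L: "L > 0" and \<xi>m: "\<xi> \<in> borel_measurable M"
    and \<xi>b: "\<forall>t\<in>{0..L}. \<forall>x. AE w in M. nr (T t x) w \<le> \<xi> w * nr x w"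
    using asb unfolding as_bounded_def by blast
  define \<xi>1 where "\<xi>1 w = max 1 (\<xi> w)" for w
  have \<xi>1m[measurable]: "\<xi>1 \<in> borel_measurable M" unfolding \<xi>1_def using \<xi>m by measurable
  have \<xi>1ge: "1 \<le> \<xi>1 w" for w unfolding \<xi>1_def by simp
  have base: "AE w in M. nr (T t x) w \<le> \<xi>1 w * nr x w" if "t \<in> {0..L}" for t x
    using \<xi>b that nr_nonneg[of x]
  proof -
    have "AE w in M. nr (T t x) w \<le> \<xi> w * nr x w" using \<xi>b that by blast
    then show ?thesis using nr_nonneg[of x]
    proof eventually_elim
      case (elim w)
      have "\<xi> w * nr x w \<le> \<xi>1 w * nr x w" unfolding \<xi>1_def using elim(2) by (intro mult_right_mono) auto
      then show ?case using elim(1) by linarith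
    qed
  qed
  have ind: "\<forall>t\<in>{0..real n * L}. \<forall>x. AE w in M. nr (T t x) w \<le> \<xi>1 w ^ n * nr x w" for n
  proof (induction n)
    case 0
    show ?case
    proof (intro ballI allI)
      fix t x assume "t \<in> {0..real 0 * L}"
      then have "t = 0" by simp
      then show "AE w in M. nr (T t x) w \<le> \<xi>1 w ^ 0 * nr x w" by simp
    qed
  next
    case (Suc n)
    show ?case
    proof (intro ballI allI)
      fix t x assume t: "t \<in> {0..real (Suc n) * L}"
      show "AE w in M. nr (T t x) w \<le> \<xi>1 w ^ Suc n * nr x w"
      proof (cases "t \<le> L")
        case True
        then have "AE w in M. nr (T t x) w \<le> \<xi>1 w * nr x w" using t by (intro base) auto
        then show ?thesis using nr_nonneg[of x]
        proof eventually_elim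
          case (elim w)
          have "1 \<le> \<xi>1 w ^ n" using \<xi>1ge by simp
          then have "\<xi>1 w \<le> \<xi>1 w ^ Suc n" using \<xi>1ge[of w]
            by (metis mult.right_neutral mult_left_mono order_trans zero_le_one power_Suc)
          then have "\<xi>1 w * nr x w \<le> \<xi>1 w ^ Suc n * nr x w" using elim(2) by (intro mult_right_mono)
          then show ?case using elim(1) by linarith
        qed
      next
        case False
        then have tL: "t - L \<in> {0..real n * L}" using t by (auto simp: algebra_simps)
        have eq: "T t x = T (t - L) (T L x)" using False L by (simp add: T_semi)
        have "AE w in M. nr (T (t - L) (T L x)) w \<le> \<xi>1 w ^ n * nr (T L x) w"
          using Suc.IH tL by blast
        moreover have "AE w in M. nr (T L x) w \<le> \<xi>1 w * nr x w" using L by (intro base) auto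
        ultimately show ?thesis unfolding eq
        proof eventually_elim
          case (elim w)
          have "0 \<le> \<xi>1 w ^ n" using \<xi>1ge[of w] by simp
          then have "\<xi>1 w ^ n * nr (T L x) w \<le> \<xi>1 w ^ n * (\<xi>1 w * nr x w)"
            using elim(2) by (intro mult_left_mono)
          then show ?case using elim(1) by (simp add: mult.assoc mult.commute mult.left_commute)
        qed
      qed
    qed
  qed
  obtain n where n: "B / L \<le> real n" using real_arch_simple by blast
  have "B \<le> real n * L" using n L by (simp add: field_simps)
  then have "\<forall>t\<in>{0..B}. \<forall>x. AE w in M. nr (T t x) w \<le> \<xi>1 w ^ n * nr x w"
    using ind[of n] by auto
  moreover have "(\<lambda>w. \<xi>1 w ^ n) \<in> borel_measurable M" by measurable
  moreover have "AE w in M. 1 \<le> \<xi>1 w ^ n" using \<xi>1ge by simp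
  ultimately show ?thesis by (intro bexI[where x="\<lambda>w. \<xi>1 w ^ n"]) simp_all
qed

lemma rn_tendsto_dom:
  assumes [measurable]: "\<xi> \<in> borel_measurable M" and nn: "AE w in M. 0 \<le> \<xi> w"
    and dom: "eventually (\<lambda>i. AE w in M. nr (f i - x) w \<le> \<xi> w * nr (g i - y) w) F"
    and lim: "rn_tendsto M nr g y F"
  shows "rn_tendsto M nr f x F"
proof (rule rn_tendstoI)
  fix e l :: real assume el: "e > 0" "l > 0"
  obtain C where C: "C > 0" "measure M {w\<in>space M. C \<le> \<xi> w} < l / 2"
    using big_small[of \<xi> "l/2"] el by auto
  have "eventually (\<lambda>i. Pm (e / C) (g i - y) < l / 2) F" using lim el C by (intro rn_tendstoD) auto
  with dom show "eventually (\<lambda>i. Pm e (f i - x) < l) F"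
  proof eventually_elim
    case (elim i)
    have "Pm e (f i - x) \<le> measure M {w\<in>space M. e \<le> \<xi> w * nr (g i - y) w}"
      by (rule meas_le1) (use elim(1) in \<open>auto elim!: AE_mp\<close>)
    also have "\<dots> \<le> measure M {w\<in>space M. C \<le> \<xi> w} + Pm (e / C) (g i - y)"
      by (rule prod_bound) (use nn C el in auto)
    finally show ?case using C elim(2) by linarith
  qed
qed

end


context sg begin

definition q :: "real \<Rightarrow> 'a \<Rightarrow> 'a" where
  "q h x = sm (rsc (1/h)) (T h x - x)"

abbreviation D where "D \<equiv> gen_domain M sm nr T"

lemma D_iff: "x \<in> D \<longleftrightarrow> (\<exists>y. rn_tendsto M nr (\<lambda>t. q t x) y (at_right 0))"
  unfolding gen_domain_def q_def by simp

lemma A_lim: "x \<in> D \<Longrightarrow> rn_tendsto M nr (\<lambda>t. q t x) (A x) (at_right 0)"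
  using gen unfolding is_generator_def q_def by simp

lemma D_I: assumes "rn_tendsto M nr (\<lambda>t. q t x) y (at_right 0)" shows "x \<in> D" "A x = y"
proof -
  show xD: "x \<in> D" using assms D_iff by blast
  show "A x = y" using rn_tendsto_unique[OF trivial_limit_at_right_real A_lim[OF xD] assms] .
qed

lemma ev_pos: "eventually (\<lambda>t. 0 < t) (at_right (0::real))"
  by (rule eventually_at_right_less)

lemma sm_lim:
  assumes \<xi>: "\<xi> \<in> L0 M" and lim: "rn_tendsto M nr f x F"
  shows "rn_tendsto M nr (\<lambda>i. sm \<xi> (f i)) (sm \<xi> x) F"
proof (rule rn_tendsto_dom[OF _ _ _ lim])
  have [measurable]: "\<xi> \<in> borel_measurable M" using \<xi> unfolding L0_def by simp
  show "(\<lambda>w. norm (\<xi> w)) \<in> borel_measurable M" by measurable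
  show "AE w in M. 0 \<le> norm (\<xi> w)" by simp
  show "eventually (\<lambda>i. AE w in M. nr (sm \<xi> (f i) - sm \<xi> x) w \<le> norm (\<xi> w) * nr (f i - x) w) F"
  proof (rule always_eventually, rule allI)
    fix i
    show "AE w in M. nr (sm \<xi> (f i) - sm \<xi> x) w \<le> norm (\<xi> w) * nr (f i - x) w"
      using nr_sm[OF \<xi>, of "f i - x"] unfolding sm_diff[OF \<xi>, symmetric] by eventually_elim simp
  qed
qed

lemma T_lim:
  assumes t: "t \<ge> 0" and lim: "rn_tendsto M nr f x F"
  shows "rn_tendsto M nr (\<lambda>i. T t (f i)) (T t x) F"
proof -
  obtain \<Xi> where [measurable]: "\<Xi> \<in> borel_measurable M" and \<Xi>1: "AE w in M. 1 \<le> \<Xi> w"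
    and \<Xi>b: "\<forall>s\<in>{0..t}. \<forall>x. AE w in M. nr (T s x) w \<le> \<Xi> w * nr x w"
    using Tbound[of t] by blast
  show ?thesis
  proof (rule rn_tendsto_dom[OF _ _ _ lim])
    show "AE w in M. 0 \<le> \<Xi> w" using \<Xi>1 by eventually_elim simp
    show "eventually (\<lambda>i. AE w in M. nr (T t (f i) - T t x) w \<le> \<Xi> w * nr (f i - x) w) F"
    proof (rule always_eventually, rule allI)
      fix i
      have "AE w in M. nr (T t (f i - x)) w \<le> \<Xi> w * nr (f i - x) w" using \<Xi>b t by simp
      then show "AE w in M. nr (T t (f i) - T t x) w \<le> \<Xi> w * nr (f i - x) w"
        unfolding T_diff[OF t, symmetric] .
    qed
  qed simp
qed

lemma q_add: "h \<ge> 0 \<Longrightarrow> q h (x + y) = q h x + q h y"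
  unfolding q_def by (simp add: T_add sm_add[symmetric] algebra_simps)

lemma q_sm: "h \<ge> 0 \<Longrightarrow> \<xi> \<in> L0 M \<Longrightarrow> q h (sm \<xi> x) = sm \<xi> (q h x)"
  unfolding q_def by (simp add: T_sm sm_diff[symmetric] sm_comm)

lemma q_T: "h \<ge> 0 \<Longrightarrow> t \<ge> 0 \<Longrightarrow> q h (T t x) = T t (q h x)"
  unfolding q_def by (simp add: T_rsc T_diff T_comm)

lemma D_zero: "0 \<in> D"
proof -
  have "rn_tendsto M nr (\<lambda>t. q t 0) 0 (at_right 0)"
    by (rule rn_tendsto_cong[OF rn_tendsto_const]) 
       (use ev_pos in \<open>eventually_elim, simp add: q_def T_zero sm_zero\<close>)
  then show ?thesis by (rule D_I)
qed

lemma D_add: assumes "x \<in> D" "y \<in> D" shows "x + y \<in> D" "A (x + y) = A x + A y"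
proof -
  have "rn_tendsto M nr (\<lambda>t. q t x + q t y) (A x + A y) (at_right 0)"
    by (rule rn_tendsto_add[OF A_lim[OF assms(1)] A_lim[OF assms(2)]])
  then have "rn_tendsto M nr (\<lambda>t. q t (x + y)) (A x + A y) (at_right 0)"
    by (rule rn_tendsto_cong) (use ev_pos in \<open>eventually_elim, simp add: q_add\<close>)
  then show "x + y \<in> D" "A (x + y) = A x + A y" by (rule D_I)+
qed

lemma D_sm: assumes "x \<in> D" "\<xi> \<in> L0 M" shows "sm \<xi> x \<in> D" "A (sm \<xi> x) = sm \<xi> (A x)"
proof -
  have "rn_tendsto M nr (\<lambda>t. sm \<xi> (q t x)) (sm \<xi> (A x)) (at_right 0)"
    by (rule sm_lim[OF assms(2) A_lim[OF assms(1)]])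
  then have "rn_tendsto M nr (\<lambda>t. q t (sm \<xi> x)) (sm \<xi> (A x)) (at_right 0)"
    by (rule rn_tendsto_cong) (use ev_pos in \<open>eventually_elim, simp add: q_sm assms(2)\<close>)
  then show "sm \<xi> x \<in> D" "A (sm \<xi> x) = sm \<xi> (A x)" by (rule D_I)+
qed

lemma D_T: assumes "x \<in> D" "t \<ge> 0" shows "T t x \<in> D" "A (T t x) = T t (A x)"
proof -
  have "rn_tendsto M nr (\<lambda>h. T t (q h x)) (T t (A x)) (at_right 0)"
    by (rule T_lim[OF assms(2) A_lim[OF assms(1)]])
  then have "rn_tendsto M nr (\<lambda>h. q h (T t x)) (T t (A x)) (at_right 0)"
    by (rule rn_tendsto_cong) (use ev_pos in \<open>eventually_elim, simp add: q_T assms(2)\<close>)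
  then show "T t x \<in> D" "A (T t x) = T t (A x)" by (rule D_I)+
qed

end


context sg begin

lemma ev_lt: "t > 0 \<Longrightarrow> eventually (\<lambda>k. k < t) (at_right (0::real))"
  unfolding eventually_at_right_field by (intro exI[of _ t]) auto

lemma deriv_right:
  assumes x: "x \<in> D" and t: "t \<ge> 0"
  shows "rn_tendsto M nr (\<lambda>h. sm (rsc (1/h)) (T (t + h) x - T t x)) (T t (A x)) (at_right 0)"
proof -
  have "rn_tendsto M nr (\<lambda>h. T t (q h x)) (T t (A x)) (at_right 0)"
    by (rule T_lim[OF t A_lim[OF x]])
  then show ?thesis
  proof (rule rn_tendsto_cong)
    show "eventually (\<lambda>h. T t (q h x) = sm (rsc (1/h)) (T (t + h) x - T t x)) (at_right 0)"
      using ev_pos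
    proof eventually_elim
      case (elim h)
      then show ?case using t by (simp add: q_def T_rsc T_diff T_semi)
    qed
  qed
qed

lemma deriv_left_eq:
  assumes k: "0 < k" "k \<le> t"
  shows "sm (rsc (1/(-k))) (T (t + - k) x - T t x) = T (t - k) (q k x)"
proof -
  have tk: "t - k \<ge> 0" using k by simp
  have "T t x = T (t - k) (T k x)" using k by (simp add: T_semi)
  then have "T (t + - k) x - T t x = T (t - k) (x - T k x)" using tk by (simp add: T_diff)
  also have "\<dots> = - T (t - k) (T k x - x)" using tk by (simp add: T_diff)
  finally have "sm (rsc (1/(-k))) (T (t + - k) x - T t x) = sm (rsc (- (1/k))) (- T (t - k) (T k x - x))"
    by simp
  also have "\<dots> = sm (rsc (1/k)) (T (t - k) (T k x - x))"
    by (simp add: rsc_neg sm_minus)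
  also have "\<dots> = T (t - k) (q k x)" using tk by (simp add: q_def T_rsc)
  finally show ?thesis .
qed

lemma deriv_left:
  assumes x: "x \<in> D" and t: "t > 0"
  shows "rn_tendsto M nr (\<lambda>k. sm (rsc (1/(-k))) (T (t + - k) x - T t x)) (T t (A x)) (at_right 0)"
proof -
  obtain \<Xi> where [measurable]: "\<Xi> \<in> borel_measurable M" and \<Xi>1: "AE w in M. 1 \<le> \<Xi> w"
    and \<Xi>b: "\<forall>s\<in>{0..t}. \<forall>x. AE w in M. nr (T s x) w \<le> \<Xi> w * nr x w"
    using Tbound[of t] by blast
  have \<Xi>0: "AE w in M. 0 \<le> \<Xi> w" using \<Xi>1 by eventually_elim simp
  have ev: "eventually (\<lambda>k. 0 < k \<and> k < t) (at_right 0)"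
    using ev_pos ev_lt[OF t] by eventually_elim simp
  have i: "rn_tendsto M nr (\<lambda>k. T (t - k) (q k x - A x)) 0 (at_right 0)"
  proof (rule rn_tendsto_dom[OF _ \<Xi>0 _ A_lim[OF x]])
    show "eventually (\<lambda>k. AE w in M. nr (T (t - k) (q k x - A x) - 0) w \<le> \<Xi> w * nr (q k x - A x) w) (at_right 0)"
      using ev
    proof eventually_elim
      case (elim k)
      then show ?case using \<Xi>b by simp
    qed
  qed simp
  have ii: "rn_tendsto M nr (\<lambda>k. T (t - k) (A x)) (T t (A x)) (at_right 0)"
  proof (rule rn_tendsto_dom[OF _ \<Xi>0 _ C0_lim[of "A x"]])
    show "eventually (\<lambda>k. AE w in M. nr (T (t - k) (A x) - T t (A x)) w \<le> \<Xi> w * nr (T k (A x) - A x) w) (at_right 0)"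
      using ev
    proof eventually_elim
      case (elim k)
      then have tk: "t - k \<ge> 0" by simp
      have "T t (A x) = T (t - k) (T k (A x))" using elim by (simp add: T_semi)
      then have eq: "T (t - k) (A x) - T t (A x) = T (t - k) (A x - T k (A x))" using tk by (simp add: T_diff)
      have "AE w in M. nr (T (t - k) (A x - T k (A x))) w \<le> \<Xi> w * nr (A x - T k (A x)) w"
        using \<Xi>b tk elim by simp
      then show ?case unfolding eq using nr_comm[of "A x" "T k (A x)"] by eventually_elim simp
    qed
  qed simp
  have "rn_tendsto M nr (\<lambda>k. T (t - k) (q k x - A x) + T (t - k) (A x)) (0 + T t (A x)) (at_right 0)"
    by (rule rn_tendsto_add[OF i ii])
  then have "rn_tendsto M nr (\<lambda>k. T (t - k) (q k x - A x) + T (t - k) (A x)) (T t (A x)) (at_right 0)"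
    by simp
  then have "rn_tendsto M nr (\<lambda>k. T (t - k) (q k x)) (T t (A x)) (at_right 0)"
    by (rule rn_tendsto_cong) (use ev in \<open>eventually_elim, simp add: T_diff\<close>)
  then show ?thesis
  proof (rule rn_tendsto_cong)
    show "eventually (\<lambda>k. T (t - k) (q k x) = sm (rsc (1/(-k))) (T (t + - k) x - T t x)) (at_right 0)"
      using ev
    proof eventually_elim
      case (elim k)
      then show ?case by (intro deriv_left_eq[symmetric]) auto
    qed
  qed
qed

lemma deriv:
  assumes x: "x \<in> D" and t: "t \<ge> 0"
  shows "rn_has_deriv M sm nr (\<lambda>s. T s x) (A (T t x)) t {0..}"
  unfolding rn_has_deriv_def D_T(2)[OF x t]
proof (rule rn_tendstoI)
  fix e l :: real assume el: "e > 0" "l > 0"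
  let ?Q = "\<lambda>h. sm (rsc (1/h)) (T (t + h) x - T t x)"
  have "eventually (\<lambda>h. Pm e (?Q h - T t (A x)) < l) (at_right 0)"
    using deriv_right[OF x t] el by (rule rn_tendstoD)
  then obtain b1 where b1: "b1 > 0" "\<And>h. 0 < h \<Longrightarrow> h < b1 \<Longrightarrow> Pm e (?Q h - T t (A x)) < l"
    unfolding eventually_at_right_field by auto
  obtain b2 where b2: "b2 > 0" "\<And>k. t > 0 \<Longrightarrow> 0 < k \<Longrightarrow> k < b2 \<Longrightarrow> Pm e (?Q (- k) - T t (A x)) < l"
  proof (cases "t > 0")
    case True
    have "eventually (\<lambda>k. Pm e (?Q (- k) - T t (A x)) < l) (at_right 0)"
      using deriv_left[OF x True] el by (rule rn_tendstoD)
    then obtain b where "b > 0" "\<And>k. 0 < k \<Longrightarrow> k < b \<Longrightarrow> Pm e (?Q (- k) - T t (A x)) < l"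
      unfolding eventually_at_right_field by auto
    then show ?thesis using that by blast
  next
    case False
    then show ?thesis using that[of 1] by auto
  qed
  show "eventually (\<lambda>h. Pm e ((\<lambda>h. sm (rsc (1 / h)) ((\<lambda>s. T s x) (t + h) - (\<lambda>s. T s x) t)) h - T t (A x)) < l)
          (at 0 within {h. t + h \<in> {0..}})"
    unfolding eventually_at
  proof (intro exI[of _ "min b1 b2"] conjI ballI impI)
    show "0 < min b1 b2" using b1 b2 by simp
    fix h assume h: "h \<in> {h. t + h \<in> {0..}}" "h \<noteq> 0 \<and> dist h 0 < min b1 b2"
    show "Pm e ((\<lambda>h. sm (rsc (1 / h)) ((\<lambda>s. T s x) (t + h) - (\<lambda>s. T s x) t)) h - T t (A x)) < l"
    proof (cases "h > 0")
      case True
      then show ?thesis using h b1(2)[of h] by (simp add: dist_real_def)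
    next
      case False
      then have hn: "h < 0" using h by simp
      then have "t > 0" using h by simp
      then have "Pm e (?Q (- (- h)) - T t (A x)) < l" using h hn b2(2)[of "- h"] by (simp add: dist_real_def)
      then show ?thesis by simp
    qed
  qed
qed

end



lemma comb_choice:
  fixes B :: "nat set" and Mn m :: nat
  assumes m: "m \<le> Mn" and B: "B \<subseteq> {..3*Mn}" and c: "2 * card B < Mn + 1"
  shows "\<exists>j. Mn \<le> j \<and> j \<le> 2*Mn \<and> j \<notin> B \<and> j + m \<notin> B"
proof (rule ccontr)
  assume "\<not> ?thesis"
  then have cov: "{Mn..2*Mn} \<subseteq> (B \<inter> {Mn..2*Mn}) \<union> {j\<in>{Mn..2*Mn}. j + m \<in> B}" by auto
  have fB: "finite B" using B finite_subset by blast
  have "{j\<in>{Mn..2*Mn}. j + m \<in> B} \<subseteq> (\<lambda>b. b - m) ` B" by force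
  then have c2: "card {j\<in>{Mn..2*Mn}. j + m \<in> B} \<le> card B"
    by (meson card_image_le card_mono fB finite_imageI order_trans)
  have c1: "card (B \<inter> {Mn..2*Mn}) \<le> card B" using fB by (simp add: card_mono)
  have "Mn + 1 = card {Mn..2*Mn}" by simp
  also have "\<dots> \<le> card ((B \<inter> {Mn..2*Mn}) \<union> {j\<in>{Mn..2*Mn}. j + m \<in> B})"
    using cov by (intro card_mono) auto
  also have "\<dots> \<le> card (B \<inter> {Mn..2*Mn}) + card {j\<in>{Mn..2*Mn}. j + m \<in> B}" by (rule card_Un_le)
  finally show False using c1 c2 c by linarith
qed

context sg begin

lemma Pm_zero: "e > 0 \<Longrightarrow> Pm e 0 = 0"
proof -
  assume e: "e > 0"
  have "Pm e 0 \<le> measure M {w\<in>space M. False}"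
    by (rule meas_le1) (use nr_zero e in \<open>auto elim!: AE_mp\<close>)
  then show ?thesis using Pm_nonneg[of e 0] by simp
qed

lemma g_small:
  assumes e: "e > 0" and l: "l > 0"
  shows "\<exists>b>0. \<forall>u. 0 \<le> u \<and> u < b \<longrightarrow> Pm e (T u y - y) < l"
proof -
  have "eventually (\<lambda>u. Pm e (T u y - y) < l) (at_right 0)" using C0_lim e l by (rule rn_tendstoD)
  then obtain b where b: "b > 0" "\<And>u. 0 < u \<Longrightarrow> u < b \<Longrightarrow> Pm e (T u y - y) < l"
    unfolding eventually_at_right_field by auto
  show ?thesis
  proof (intro exI[of _ b] conjI allI impI)
    fix u assume u: "0 \<le> u \<and> u < b"
    show "Pm e (T u y - y) < l"
    proof (cases "u = 0")
      case True then show ?thesis using Pm_zero[OF e] l by simp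
    next
      case False then show ?thesis using u b by simp
    qed
  qed (use b in simp)
qed

lemma g_ineq1:
  assumes a: "0 \<le> a" "a \<le> B" and u: "0 \<le> u"
    and \<Xi>b: "\<forall>t\<in>{0..B}. \<forall>x. AE w in M. nr (T t x) w \<le> \<Xi> w * nr x w"
  shows "AE w in M. nr (T a y - y) w \<le> nr (T (u + a) y - y) w + \<Xi> w * nr (T u y - y) w"
proof -
  have eq: "T a y - y = (T (u + a) y - y) - T a (T u y - y)"
    using a u by (simp add: T_diff T_semi add.commute)
  have "AE w in M. nr (T a (T u y - y)) w \<le> \<Xi> w * nr (T u y - y) w" using \<Xi>b a by simp
  with nr_diff_le[of "T (u + a) y - y" "T a (T u y - y)"] show ?thesis
    unfolding eq by eventually_elim simp
qed

lemma g_ineq2: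
  assumes a: "0 \<le> a" "a \<le> B" and r: "0 \<le> r"
    and \<Xi>b: "\<forall>t\<in>{0..B}. \<forall>x. AE w in M. nr (T t x) w \<le> \<Xi> w * nr x w"
  shows "AE w in M. nr (T (a + r) y - y) w \<le> nr (T a y - y) w + \<Xi> w * nr (T r y - y) w"
proof -
  have eq: "T (a + r) y - y = T a (T r y - y) + (T a y - y)"
    using a r by (simp add: T_diff T_semi)
  have "AE w in M. nr (T a (T r y - y)) w \<le> \<Xi> w * nr (T r y - y) w" using \<Xi>b a by simp
  with nr_add_le[of "T a (T r y - y)" "T a y - y"] show ?thesis
    unfolding eq by eventually_elim simp
qed

lemma UC:
  assumes e: "e > 0" and l: "l > 0"
  shows "\<exists>\<delta>>0. \<forall>H. finite H \<and> H \<subseteq> {0..\<delta>} \<longrightarrow>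
           measure M {w\<in>space M. \<exists>h\<in>H. e \<le> nr (T h y - y) w} < l"
proof -
  obtain \<Xi> where \<Xi>m[measurable]: "\<Xi> \<in> borel_measurable M" and \<Xi>1: "AE w in M. 1 \<le> \<Xi> w"
    and \<Xi>b: "\<forall>s\<in>{0..3}. \<forall>x. AE w in M. nr (T s x) w \<le> \<Xi> w * nr x w"
    using Tbound[of 3] by blast
  obtain C where C: "C > 0" "measure M {w\<in>space M. C \<le> \<Xi> w} < l/3"
    using big_small[OF \<Xi>m, of "l/3"] l by auto
  define e' where "e' = e / (1 + 2*C)"
  have e': "e' > 0" using e C by (simp add: e'_def)
  have ee: "e' * (1 + 2*C) = e" using C by (simp add: e'_def)
  obtain b1 where b1: "b1 > 0" "\<forall>u. 0 \<le> u \<and> u < b1 \<longrightarrow> Pm e' (T u y - y) < l/18"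
    using g_small[OF e', of "l/18"] l by auto
  define \<delta> where "\<delta> = min (b1/4) 1"
  have \<delta>: "\<delta> > 0" "3*\<delta> < b1" "\<delta> \<le> 1" using b1 by (auto simp: \<delta>_def)
  show ?thesis
  proof (intro exI[of _ \<delta>] conjI allI impI)
    show "\<delta> > 0" by (rule \<delta>)
    fix H assume H: "finite H \<and> H \<subseteq> {0..\<delta>}"
    define n where "n = card H"
    obtain b2 where b2: "b2 > 0" "\<forall>u. 0 \<le> u \<and> u < b2 \<longrightarrow> Pm e' (T u y - y) < l/(3*(n+1))"
      using g_small[OF e', of "l/(3*(n+1))"] l by auto
    define d where "d = min (b2/2) \<delta>"
    have d: "d > 0" "d < b2" "d \<le> \<delta>" using b2 \<delta> by (auto simp: d_def)
    define Mn where "Mn = nat \<lfloor>\<delta>/d\<rfloor>"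
    have "1 \<le> \<delta>/d" using d by simp
    then have fl1: "1 \<le> \<lfloor>\<delta>/d\<rfloor>" by linarith
    then have Mnr: "real Mn = of_int \<lfloor>\<delta>/d\<rfloor>" unfolding Mn_def by simp
    have Mn: "real Mn * d \<le> \<delta>" "1 \<le> Mn"
    proof -
      have "real Mn \<le> \<delta>/d" unfolding Mnr by linarith
      then show "real Mn * d \<le> \<delta>" using d by (simp add: field_simps)
      show "1 \<le> Mn" using fl1 unfolding Mn_def by linarith
    qed
    define m where "m h = nat \<lfloor>h/d\<rfloor>" for h
    define r where "r h = h - real (m h) * d" for h
    have mr: "m h \<le> Mn \<and> 0 \<le> r h \<and> r h < d \<and> h = real (m h) * d + r h" if h: "h \<in> H" for h
    proof -
      have h0: "0 \<le> h" "h \<le> \<delta>" using h H by auto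
      then have f0: "0 \<le> \<lfloor>h/d\<rfloor>" using d by simp
      then have mrr: "real (m h) = of_int \<lfloor>h/d\<rfloor>" unfolding m_def by simp
      have "\<lfloor>h/d\<rfloor> \<le> \<lfloor>\<delta>/d\<rfloor>" using h0 d by (intro floor_mono divide_right_mono) auto
      then have "m h \<le> Mn" unfolding m_def Mn_def by (simp add: nat_mono)
      moreover have "real (m h) \<le> h/d" "h/d < real (m h) + 1" unfolding mrr by linarith+
      then have "real (m h) * d \<le> h" "h < real (m h) * d + d" using d by (simp_all add: field_simps)
      ultimately show ?thesis unfolding r_def by auto
    qed
    define g where "g t w = nr (T t y - y) w" for t w
    have gm[measurable]: "g t \<in> borel_measurable M" for t unfolding g_def by simp
    define Bw where "Bw w = {j\<in>{..3*Mn}. e' \<le> g (real j * d) w}" for w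
    define S where "S j = {w\<in>space M. e' \<le> g (real j * d) w}" for j
    have S[measurable]: "S j \<in> sets M" for j unfolding S_def by simp
    define cnt where "cnt w = (\<Sum>j\<in>{..3*Mn}. indicator (S j) w :: real)" for w
    have cnt_card: "cnt w = real (card (Bw w))" if "w \<in> space M" for w
    proof -
      have "cnt w = (\<Sum>j\<in>{..3*Mn}. if j \<in> {j. e' \<le> g (real j * d) w} then 1 else 0)"
        unfolding cnt_def S_def using that by (intro sum.cong) (auto simp: indicator_def)
      also have "\<dots> = (\<Sum>j\<in>{..3*Mn} \<inter> {j. e' \<le> g (real j * d) w}. 1)"
        by (rule sum.inter_restrict[symmetric]) simp
      also have "\<dots> = real (card (Bw w))" unfolding Bw_def by (simp add: Int_def)
      finally show ?thesis .
    qed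
    have cntm[measurable]: "cnt \<in> borel_measurable M" unfolding cnt_def by measurable
    define E1 where "E1 = {w\<in>space M. C \<le> \<Xi> w}"
    define E2 where "E2 = {w\<in>space M. real (Mn+1)/2 \<le> cnt w}"
    define E3 where "E3 = (\<Union>h\<in>H. {w\<in>space M. e' \<le> g (r h) w})"
    have E1s: "E1 \<in> sets M" unfolding E1_def by simp
    have E2s: "E2 \<in> sets M" unfolding E2_def by simp
    have E3s: "E3 \<in> sets M" unfolding E3_def using H by (intro sets.finite_UN) auto
    have mE1: "measure M E1 < l/3" using C unfolding E1_def by simp
    have mE3: "measure M E3 < l/3"
    proof -
      have "measure M E3 \<le> (\<Sum>h\<in>H. measure M {w\<in>space M. e' \<le> g (r h) w})"
        unfolding E3_def using H by (intro finite_measure_subadditive_finite) auto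
      also have "\<dots> \<le> (\<Sum>h\<in>H. l/(3*(n+1)))"
      proof (rule sum_mono)
        fix h assume h: "h \<in> H"
        have "r h < b2" "0 \<le> r h" using mr[OF h] d by auto
        then show "measure M {w\<in>space M. e' \<le> g (r h) w} \<le> l/(3*(n+1))"
          using b2(2) unfolding g_def by (simp add: less_imp_le)
      qed
      also have "\<dots> = real n * (l/(3*(n+1)))" unfolding n_def by simp
      also have "\<dots> < l/3"
      proof -
        have "real n * (l/(3*(n+1))) = (l/3) * (real n / (real n + 1))" by (simp add: field_simps)
        also have "\<dots> < (l/3) * 1" using l by (intro mult_strict_left_mono) auto
        finally show ?thesis by simp
      qed
      finally show ?thesis .
    qed
    have mE2: "measure M E2 < l/3"
    proof -
      have int: "integrable M cnt" unfolding cnt_def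
        by (intro Bochner_Integration.integrable_sum integrable_real_indicator) (auto simp: less_top[symmetric])
      have icnt: "integral\<^sup>L M cnt = (\<Sum>j\<in>{..3*Mn}. measure M (S j))"
        unfolding cnt_def using S
        by (subst Bochner_Integration.integral_sum) (auto intro!: integrable_real_indicator simp: less_top[symmetric] integral_indicator
              Int_absorb2 sets.sets_into_space)
      have "measure M E2 \<le> integral\<^sup>L M cnt / (real (Mn+1)/2)"
        unfolding E2_def
      proof (rule integral_Markov_inequality_measure[OF int, of "space M"])
        show "AE x in M. 0 \<le> cnt x" unfolding cnt_def by (simp add: sum_nonneg)
      qed auto
      also have "\<dots> \<le> (\<Sum>j\<in>{..3*Mn}. l/18) / (real (Mn+1)/2)"
        unfolding icnt
      proof (intro divide_right_mono sum_mono)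
        fix j assume j: "j \<in> {..3*Mn}"
        have "real j * d \<le> 3 * \<delta>"
        proof -
          have "real j * d \<le> real (3*Mn) * d" using j d by (intro mult_right_mono) auto
          also have "\<dots> = 3 * (real Mn * d)" by simp
          also have "\<dots> \<le> 3 * \<delta>" using Mn by simp
          finally show ?thesis .
        qed
        then have "0 \<le> real j * d \<and> real j * d < b1" using \<delta> d by auto
        then show "measure M (S j) \<le> l/18" using b1(2) unfolding S_def g_def by (simp add: less_imp_le)
      qed simp
      also have "\<dots> = (real (3*Mn) + 1) * (l/18) * 2 / (real Mn + 1)" by (simp add: algebra_simps)
      also have "\<dots> < l/3"
      proof -
        have "(real (3*Mn) + 1) * (l/18) * 2 < (l/3) * (real Mn + 1)" using l by (simp add: field_simps)
        then show ?thesis by (simp add: field_simps)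
      qed
      finally show ?thesis .
    qed
    have N2: "AE w in M. \<forall>p\<in>H \<times> {..2*Mn}.
        g (real (m (fst p)) * d) w \<le> g (real (snd p + m (fst p)) * d) w + \<Xi> w * g (real (snd p) * d) w"
    proof (subst AE_finite_all)
      show "finite (H \<times> {..2*Mn})" using H by simp
      show "\<forall>p\<in>H \<times> {..2*Mn}. AE w in M.
        g (real (m (fst p)) * d) w \<le> g (real (snd p + m (fst p)) * d) w + \<Xi> w * g (real (snd p) * d) w"
      proof
        fix p assume p: "p \<in> H \<times> {..2*Mn}"
        obtain h j where hj: "p = (h, j)" "h \<in> H" by (metis mem_Sigma_iff p prod.collapse)
        have a: "real (m h) * d \<le> 3"
        proof -
          have "real (m h) * d \<le> real Mn * d" using mr[OF hj(2)] d by (intro mult_right_mono) auto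
          then show ?thesis using Mn \<delta> by linarith
        qed
        have eq: "real j * d + real (m h) * d = real (j + m h) * d" by (simp add: distrib_right)
        have "AE w in M. nr (T (real (m h) * d) y - y) w \<le> nr (T (real j * d + real (m h) * d) y - y) w
               + \<Xi> w * nr (T (real j * d) y - y) w"
          using a d by (intro g_ineq1[OF _ _ _ \<Xi>b]) auto
        then show "AE w in M.
          g (real (m (fst p)) * d) w \<le> g (real (snd p + m (fst p)) * d) w + \<Xi> w * g (real (snd p) * d) w"
          unfolding hj g_def eq by simp
      qed
    qed
    have N3: "AE w in M. \<forall>h\<in>H. g h w \<le> g (real (m h) * d) w + \<Xi> w * g (r h) w"
    proof (subst AE_finite_all)
      show "finite H" using H by simp
      show "\<forall>h\<in>H. AE w in M. g h w \<le> g (real (m h) * d) w + \<Xi> w * g (r h) w"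
      proof
        fix h assume h: "h \<in> H"
        have a: "real (m h) * d \<le> 3"
        proof -
          have "real (m h) * d \<le> real Mn * d" using mr[OF h] d by (intro mult_right_mono) auto
          then show ?thesis using Mn \<delta> by linarith
        qed
        have "AE w in M. nr (T (real (m h) * d + r h) y - y) w \<le> nr (T (real (m h) * d) y - y) w
                + \<Xi> w * nr (T (r h) y - y) w"
          using a d mr[OF h] by (intro g_ineq2[OF _ _ _ \<Xi>b]) auto
        then show "AE w in M. g h w \<le> g (real (m h) * d) w + \<Xi> w * g (r h) w"
          unfolding g_def using mr[OF h] by simp
      qed
    qed
    have main: "AE w in M. w \<in> {w\<in>space M. \<exists>h\<in>H. e \<le> g h w} \<longrightarrow> w \<in> E1 \<union> E2 \<union> E3"
      using \<Xi>1 N2 N3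
    proof eventually_elim
      case (elim w)
      show ?case
      proof (rule impI, rule ccontr)
        assume wH: "w \<in> {w\<in>space M. \<exists>h\<in>H. e \<le> g h w}" and nE: "w \<notin> E1 \<union> E2 \<union> E3"
        then have w: "w \<in> space M" by simp
        obtain h where h: "h \<in> H" "e \<le> g h w" using wH by auto
        have \<Xi>C: "\<Xi> w < C" using nE w unfolding E1_def by auto
        have "cnt w < real (Mn+1)/2" using nE w unfolding E2_def by auto
        then have "real (2 * card (Bw w)) < real (Mn + 1)" using cnt_card[OF w] by simp
        then have cB: "2 * card (Bw w) < Mn + 1" by (simp only: of_nat_less_iff)
        have gr: "g (r h) w < e'" using nE w h unfolding E3_def by auto
        have BwS: "Bw w \<subseteq> {..3*Mn}" unfolding Bw_def by auto
        obtain j where j: "Mn \<le> j" "j \<le> 2*Mn" "j \<notin> Bw w" "j + m h \<notin> Bw w"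
          using comb_choice[OF _ BwS cB, of "m h"] mr[OF h(1)] by auto
        have g1: "g (real j * d) w < e'" using j unfolding Bw_def by auto
        have g2: "g (real (j + m h) * d) w < e'" using j mr[OF h(1)] unfolding Bw_def by auto
        have i2: "g (real (m h) * d) w \<le> g (real (j + m h) * d) w + \<Xi> w * g (real j * d) w"
          using elim(2) h(1) j(2) by auto
        have i3: "g h w \<le> g (real (m h) * d) w + \<Xi> w * g (r h) w" using elim(3) h(1) by auto
        have x1: "\<Xi> w * g (real j * d) w < \<Xi> w * e'" using elim(1) g1 by (intro mult_strict_left_mono) auto
        have x2: "\<Xi> w * g (r h) w < \<Xi> w * e'" using elim(1) gr by (intro mult_strict_left_mono) auto
        have x3: "\<Xi> w * e' < C * e'" using \<Xi>C e' by (intro mult_strict_right_mono) auto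
        have "g h w < e' + 2 * (C * e')" using i2 i3 x1 x2 x3 g2 by linarith
        also have "\<dots> = e" using ee by (simp add: algebra_simps)
        finally show False using h(2) by linarith
      qed
    qed
    have "measure M {w\<in>space M. \<exists>h\<in>H. e \<le> g h w} \<le> measure M (E1 \<union> E2 \<union> E3)"
      by (rule finite_measure_mono_AE[OF main]) (use E1s E2s E3s in auto)
    also have "\<dots> \<le> measure M (E1 \<union> E2) + measure M E3" using E1s E2s E3s by (intro measure_Un_le) auto
    also have "\<dots> \<le> measure M E1 + measure M E2 + measure M E3"
      using E1s E2s measure_Un_le[of E1 M E2] by simp
    also have "\<dots> < l" using mE1 mE2 mE3 by linarith
    finally show "measure M {w\<in>space M. \<exists>h\<in>H. e \<le> nr (T h y - y) w} < l" unfolding g_def .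
  qed
qed

end


context sg begin

lemma pair_ineq:
  assumes a: "a \<in> {0..B}" and b: "b \<in> {0..B}"
    and \<Xi>b: "\<forall>t\<in>{0..B}. \<forall>x. AE w in M. nr (T t x) w \<le> \<Xi> w * nr x w"
  shows "AE w in M. nr (T a y - T b y) w \<le> \<Xi> w * nr (T \<bar>a - b\<bar> y - y) w"
proof (cases "a \<le> b")
  case True
  have eq: "T b y - T a y = T a (T (b - a) y - y)" using a True by (simp add: T_diff T_semi)
  have "AE w in M. nr (T a (T (b - a) y - y)) w \<le> \<Xi> w * nr (T (b - a) y - y) w" using \<Xi>b a by simp
  have ab: "\<bar>a - b\<bar> = b - a" using True by simp
  show ?thesis using nr_comm[of "T a y" "T b y"] \<open>AE w in M. nr (T a (T (b - a) y - y)) w \<le> _\<close>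
    unfolding eq[symmetric] ab by eventually_elim simp
next
  case False
  have eq: "T a y - T b y = T b (T (a - b) y - y)" using b False by (simp add: T_diff T_semi)
  have "AE w in M. nr (T b (T (a - b) y - y)) w \<le> \<Xi> w * nr (T (a - b) y - y) w" using \<Xi>b b by simp
  then show ?thesis using False unfolding eq[symmetric] by simp
qed

lemma UCO:
  assumes e: "e > 0" and l: "l > 0"
  shows "\<exists>\<delta>>0. \<forall>I a b. finite I \<and> (\<forall>i\<in>I. a i \<in> {0..B} \<and> b i \<in> {0..B} \<and> \<bar>a i - b i\<bar> < \<delta>) \<longrightarrow>
           measure M {w\<in>space M. \<exists>i\<in>I. e \<le> nr (T (a i) y - T (b i) y) w} < l"
proof -
  obtain \<Xi> where \<Xi>m[measurable]: "\<Xi> \<in> borel_measurable M" and \<Xi>1: "AE w in M. 1 \<le> \<Xi> w"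
    and \<Xi>b: "\<forall>s\<in>{0..B}. \<forall>x. AE w in M. nr (T s x) w \<le> \<Xi> w * nr x w"
    using Tbound[of B] by blast
  obtain C where C: "C > 0" "measure M {w\<in>space M. C \<le> \<Xi> w} < l/2"
    using big_small[OF \<Xi>m, of "l/2"] l by auto
  obtain \<delta> where \<delta>: "\<delta> > 0" and H: "\<And>H. finite H \<and> H \<subseteq> {0..\<delta>} \<Longrightarrow>
           measure M {w\<in>space M. \<exists>h\<in>H. e / C \<le> nr (T h y - y) w} < l/2"
    using UC[of "e/C" "l/2" y] e l C by auto
  show ?thesis
  proof (intro exI[of _ \<delta>] conjI allI impI)
    show "\<delta> > 0" by (rule \<delta>)
    fix I a b assume Iab: "finite I \<and> (\<forall>i\<in>I. a i \<in> {0..B} \<and> b i \<in> {0..B} \<and> \<bar>a i - b i\<bar> < \<delta>)"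
    define H where "H = (\<lambda>i. \<bar>a i - b i\<bar>) ` I"
    have HH: "finite H \<and> H \<subseteq> {0..\<delta>}" using Iab unfolding H_def by (auto simp: less_imp_le)
    have AEI: "AE w in M. \<forall>i\<in>I. nr (T (a i) y - T (b i) y) w \<le> \<Xi> w * nr (T \<bar>a i - b i\<bar> y - y) w"
      using Iab pair_ineq[OF _ _ \<Xi>b] by (subst AE_finite_all) auto
    have "measure M {w\<in>space M. \<exists>i\<in>I. e \<le> nr (T (a i) y - T (b i) y) w}
       \<le> measure M {w\<in>space M. C \<le> \<Xi> w} + measure M {w\<in>space M. \<exists>h\<in>H. e / C \<le> nr (T h y - y) w}"
    proof (rule meas_le2)
      show "AE w in M. (\<exists>i\<in>I. e \<le> nr (T (a i) y - T (b i) y) w) \<longrightarrow>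
               C \<le> \<Xi> w \<or> (\<exists>h\<in>H. e / C \<le> nr (T h y - y) w)"
        using AEI \<Xi>1
      proof eventually_elim
        case (elim w)
        show ?case
        proof (rule impI, rule ccontr)
          assume "\<exists>i\<in>I. e \<le> nr (T (a i) y - T (b i) y) w"
            and n: "\<not> (C \<le> \<Xi> w \<or> (\<exists>h\<in>H. e / C \<le> nr (T h y - y) w))"
          then obtain i where i: "i \<in> I" "e \<le> nr (T (a i) y - T (b i) y) w" by auto
          have "\<Xi> w < C" using n by auto
          have g: "nr (T \<bar>a i - b i\<bar> y - y) w < e / C" using n i unfolding H_def by auto
          have "nr (T (a i) y - T (b i) y) w \<le> \<Xi> w * nr (T \<bar>a i - b i\<bar> y - y) w" using elim i by auto
          also have "\<dots> \<le> \<Xi> w * (e / C)" using elim(2) g by (intro mult_left_mono) auto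
          also have "\<dots> < C * (e / C)" using \<open>\<Xi> w < C\<close> e C by (intro mult_strict_right_mono) auto
          also have "\<dots> = e" using C by simp
          finally show False using i by linarith
        qed
      qed
      show "{w \<in> space M. \<exists>h\<in>H. e / C \<le> nr (T h y - y) w} \<in> sets M"
        using HH by (intro sets.sets_Collect_finite_Ex) auto
    qed simp
    also have "\<dots> < l" using C H[OF HH] by linarith
    finally show "measure M {w\<in>space M. \<exists>i\<in>I. e \<le> nr (T (a i) y - T (b i) y) w} < l" .
  qed
qed

lemma WS:
  assumes e: "e > 0" and l: "l > 0"
  shows "\<exists>\<delta>>0. \<forall>(I::'i set) (c::_\<Rightarrow>real) a b. finite I \<and>
      (\<forall>i\<in>I. 0 \<le> c i \<and> (c i \<noteq> 0 \<longrightarrow> a i \<in> {0..B} \<and> b i \<in> {0..B} \<and> \<bar>a i - b i\<bar> < \<delta>)) \<longrightarrow>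
      measure M {w\<in>space M. e * (\<Sum>i\<in>I. c i) < nr (\<Sum>i\<in>I. sm (rsc (c i)) (T (a i) y - T (b i) y)) w} < l"
proof -
  obtain \<delta> where \<delta>: "\<delta> > 0" and U: "\<And>(I::'i set) a b. finite I \<and> (\<forall>i\<in>I. a i \<in> {0..B} \<and> b i \<in> {0..B} \<and> \<bar>a i - b i\<bar> < \<delta>) \<Longrightarrow>
           measure M {w\<in>space M. \<exists>i\<in>I. e \<le> nr (T (a i) y - T (b i) y) w} < l"
    using UCO[OF e l, of B y] by blast
  show ?thesis
  proof (intro exI[of _ \<delta>] conjI allI impI)
    show "\<delta> > 0" by (rule \<delta>)
    fix I :: "'i set" and c :: "'i \<Rightarrow> real" and a b
    assume H: "finite I \<and> (\<forall>i\<in>I. 0 \<le> c i \<and> (c i \<noteq> 0 \<longrightarrow> a i \<in> {0..B} \<and> b i \<in> {0..B} \<and> \<bar>a i - b i\<bar> < \<delta>))"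
    define I' where "I' = {i\<in>I. c i \<noteq> 0}"
    have fI': "finite I'" using H unfolding I'_def by simp
    have s1: "(\<Sum>i\<in>I. c i) = (\<Sum>i\<in>I'. c i)" unfolding I'_def using H by (intro sum.mono_neutral_right) auto
    have s2: "(\<Sum>i\<in>I. sm (rsc (c i)) (T (a i) y - T (b i) y)) = (\<Sum>i\<in>I'. sm (rsc (c i)) (T (a i) y - T (b i) y))"
      unfolding I'_def using H by (intro sum.mono_neutral_right) auto
    have "measure M {w\<in>space M. e * (\<Sum>i\<in>I. c i) < nr (\<Sum>i\<in>I. sm (rsc (c i)) (T (a i) y - T (b i) y)) w}
        \<le> measure M {w\<in>space M. \<exists>i\<in>I'. e \<le> nr (T (a i) y - T (b i) y) w}"
    proof (rule meas_le1)
      show "AE w in M. e * (\<Sum>i\<in>I. c i) < nr (\<Sum>i\<in>I. sm (rsc (c i)) (T (a i) y - T (b i) y)) w \<longrightarrow>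
               (\<exists>i\<in>I'. e \<le> nr (T (a i) y - T (b i) y) w)"
        using nr_sum_sm[OF fI', of c "\<lambda>i. T (a i) y - T (b i) y"]
      proof eventually_elim
        case (elim w)
        show ?case
        proof (rule impI, rule ccontr)
          assume a1: "e * (\<Sum>i\<in>I. c i) < nr (\<Sum>i\<in>I. sm (rsc (c i)) (T (a i) y - T (b i) y)) w"
            and a2: "\<not> (\<exists>i\<in>I'. e \<le> nr (T (a i) y - T (b i) y) w)"
          have "(\<Sum>i\<in>I'. \<bar>c i\<bar> * nr (T (a i) y - T (b i) y) w) \<le> (\<Sum>i\<in>I'. c i * e)"
          proof (rule sum_mono)
            fix i assume i: "i \<in> I'"
            then have "0 \<le> c i" using H unfolding I'_def by auto
            moreover have "nr (T (a i) y - T (b i) y) w \<le> e" using a2 i by auto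
            ultimately show "\<bar>c i\<bar> * nr (T (a i) y - T (b i) y) w \<le> c i * e" by (simp add: mult_left_mono)
          qed
          also have "\<dots> = e * (\<Sum>i\<in>I. c i)" unfolding s1 by (simp add: sum_distrib_left mult.commute)
          finally show False using a1 elim unfolding s2 by linarith
        qed
      qed
      show "{w \<in> space M. \<exists>i\<in>I'. e \<le> nr (T (a i) y - T (b i) y) w} \<in> sets M"
        using fI' by (intro sets.sets_Collect_finite_Ex) auto
    qed
    also have "\<dots> < l" by (rule U) (use H in \<open>auto simp: I'_def fI'\<close>)
    finally show "measure M {w\<in>space M. e * (\<Sum>i\<in>I. c i) < nr (\<Sum>i\<in>I. sm (rsc (c i)) (T (a i) y - T (b i) y)) w} < l" .
  qed
qed

end



definition part :: "real \<Rightarrow> real \<Rightarrow> nat \<Rightarrow> (nat \<Rightarrow> real) \<Rightarrow> (nat \<Rightarrow> real) \<Rightarrow> bool" where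
  "part a b n s \<tau> \<longleftrightarrow> s 0 = a \<and> s n = b \<and> (\<forall>i<n. s i < s (Suc i) \<and> s i \<le> \<tau> i \<and> \<tau> i \<le> s (Suc i))"

definition mfine :: "real \<Rightarrow> nat \<Rightarrow> (nat \<Rightarrow> real) \<Rightarrow> bool" where
  "mfine \<delta> n s \<longleftrightarrow> (\<forall>i<n. s (Suc i) - s i < \<delta>)"

definition ovl :: "real \<Rightarrow> real \<Rightarrow> real \<Rightarrow> real \<Rightarrow> real" where
  "ovl c d p q = max 0 (min d q - max c p)"

lemma chain_mono:
  assumes "\<forall>i<m. s i \<le> s (Suc i)" "j \<le> k" "k \<le> m"
  shows "s j \<le> (s k :: real)"
  using assms(2,3)
proof (induction k)
  case 0 then show ?case by simp
next
  case (Suc k)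
  show ?case
  proof (cases "j = Suc k")
    case True then show ?thesis by simp
  next
    case False
    then have "s j \<le> s k" using Suc by simp
    also have "s k \<le> s (Suc k)" using assms(1) Suc by simp
    finally show ?thesis .
  qed
qed

lemma part_mono: "part a b n s \<tau> \<Longrightarrow> j \<le> k \<Longrightarrow> k \<le> n \<Longrightarrow> s j \<le> s k"
  unfolding part_def by (intro chain_mono[of n s]) (auto simp: less_imp_le)

lemma part_range: "part a b n s \<tau> \<Longrightarrow> i \<le> n \<Longrightarrow> a \<le> s i \<and> s i \<le> b"
  using part_mono[of a b n s \<tau> 0 i] part_mono[of a b n s \<tau> i n] unfolding part_def by auto

lemma part_tau: "part a b n s \<tau> \<Longrightarrow> i < n \<Longrightarrow> a \<le> \<tau> i \<and> \<tau> i \<le> b"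
  using part_range[of a b n s \<tau> i] part_range[of a b n s \<tau> "Suc i"] unfolding part_def
  by (meson Suc_leI less_imp_le order_trans)

lemma part_le: "part a b n s \<tau> \<Longrightarrow> a \<le> b"
  using part_range[of a b n s \<tau> n] by simp

lemma part_sum: "part a b n s \<tau> \<Longrightarrow> (\<Sum>i<n. s (Suc i) - s i) = b - a"
  unfolding part_def by (simp add: sum_lessThan_telescope)

lemma ovl_split: "p \<le> q \<Longrightarrow> q \<le> r \<Longrightarrow> ovl c d p q + ovl c d q r = ovl c d p r"
  unfolding ovl_def by (auto simp: max_def min_def)

lemma ovl_sum:
  assumes "\<forall>i<m. s i \<le> s (Suc i)"
  shows "(\<Sum>k<m. ovl c d (s k) (s (Suc k))) = ovl c d (s 0) (s m)"
  using assms
proof (induction m)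
  case 0 then show ?case by (simp add: ovl_def)
next
  case (Suc m)
  have "s 0 \<le> s m" using chain_mono[of "Suc m" s 0 m] Suc.prems by simp
  moreover have "s m \<le> s (Suc m)" using Suc.prems by simp
  ultimately show ?case using Suc by (simp add: ovl_split)
qed

lemma ovl_full: "p \<le> c \<Longrightarrow> d \<le> q \<Longrightarrow> c \<le> d \<Longrightarrow> ovl c d p q = d - c"
  unfolding ovl_def by (auto simp: max_def min_def)

lemma ovl_sym: "ovl c d p q = ovl p q c d"
  unfolding ovl_def by (simp add: max.commute min.commute)

lemma ovl_nonneg: "0 \<le> ovl c d p q"
  unfolding ovl_def by simp

lemma ovl_close:
  assumes "ovl c d p q \<noteq> 0" "c \<le> t" "t \<le> d" "p \<le> t'" "t' \<le> q"
  shows "\<bar>t - t'\<bar> \<le> (d - c) + (q - p)"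
  using assms unfolding ovl_def by (auto simp: max_def min_def split: if_splits)

lemma part_row:
  assumes "part a b m s \<tau>" "a \<le> c" "c \<le> d" "d \<le> b"
  shows "(\<Sum>k<m. ovl c d (s k) (s (Suc k))) = d - c"
proof -
  have "\<forall>i<m. s i \<le> s (Suc i)" using assms(1) unfolding part_def by (auto simp: less_imp_le)
  then have "(\<Sum>k<m. ovl c d (s k) (s (Suc k))) = ovl c d (s 0) (s m)" by (rule ovl_sum)
  also have "\<dots> = d - c" using assms unfolding part_def by (intro ovl_full) auto
  finally show ?thesis .
qed

definition us :: "real \<Rightarrow> real \<Rightarrow> nat \<Rightarrow> nat \<Rightarrow> real" where
  "us a b N k = a + real k * (b - a) / real (Suc N)"

lemma us_step: "us a b N (Suc i) = us a b N i + (b - a) / real (Suc N)"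
  unfolding us_def of_nat_Suc[of i] distrib_right add_divide_distrib by simp

lemma us_0: "us a b N 0 = a" unfolding us_def by simp

lemma us_end: "us a b N (Suc N) = b"
proof -
  have "real (Suc N) * (b - a) / real (Suc N) = b - a" by simp
  then show ?thesis unfolding us_def by simp
qed

lemma us_part: "a < b \<Longrightarrow> part a b (Suc N) (us a b N) (us a b N)"
  unfolding part_def using us_0 us_end us_step by simp

lemma us_fine: "(b - a) / real (Suc N) < \<delta> \<Longrightarrow> mfine \<delta> (Suc N) (us a b N)"
  unfolding mfine_def using us_step by simp

lemma ex_fine: "\<delta> > 0 \<Longrightarrow> eventually (\<lambda>N. (b - a) / real (Suc N) < \<delta>) sequentially"
proof -
  assume d: "\<delta> > 0"
  obtain N0 :: nat where N0: "(b - a) / \<delta> < real N0" using reals_Archimedean2 by blast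
  show ?thesis unfolding eventually_sequentially
  proof (intro exI[of _ N0] allI impI)
    fix N assume "N0 \<le> N"
    then have "(b - a) / \<delta> < real (Suc N)" using N0 by linarith
    then show "(b - a) / real (Suc N) < \<delta>" using d by (simp add: field_simps)
  qed
qed



context sg begin

definition RS :: "'a \<Rightarrow> nat \<Rightarrow> (nat \<Rightarrow> real) \<Rightarrow> (nat \<Rightarrow> real) \<Rightarrow> 'a" where
  "RS y n s \<tau> = (\<Sum>i<n. sm (rsc (s (Suc i) - s i)) (T (\<tau> i) y))"

abbreviation RI :: "'a \<Rightarrow> real \<Rightarrow> real \<Rightarrow> 'a \<Rightarrow> bool" where
  "RI y a b J \<equiv> rn_has_integral M sm nr (\<lambda>s. T s y) a b J"

lemma RI_iff: "RI y a b J \<longleftrightarrow> (\<forall>e>0. \<forall>l>0. \<exists>\<delta>>0. \<forall>n s \<tau>. part a b n s \<tau> \<and> mfine \<delta> n s \<longrightarrow> Pm e (RS y n s \<tau> - J) < l)"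
proof -
  have "(s 0 = a \<and> s n = b \<and> (\<forall>i<n. s i < s (Suc i) \<and> s i \<le> \<tau> i \<and> \<tau> i \<le> s (Suc i) \<and> s (Suc i) - s i < \<delta>))
      \<longleftrightarrow> part a b n s \<tau> \<and> mfine \<delta> n s" for n s \<tau> \<delta>
    unfolding part_def mfine_def by auto
  then show ?thesis unfolding rn_has_integral_def RS_def by simp
qed

lemma DS:
  assumes P: "part a b n s \<tau>" and Q: "part a b m s' \<tau>'"
  shows "RS y n s \<tau> - RS y m s' \<tau>' =
    (\<Sum>p\<in>{..<n}\<times>{..<m}. sm (rsc (ovl (s (fst p)) (s (Suc (fst p))) (s' (snd p)) (s' (Suc (snd p)))))
        (T (\<tau> (fst p)) y - T (\<tau>' (snd p)) y))"
proof -
  define ov where "ov i k = ovl (s i) (s (Suc i)) (s' k) (s' (Suc k))" for i k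
  have r1: "s (Suc i) - s i = (\<Sum>k<m. ov i k)" if "i < n" for i
  proof -
    have "a \<le> s i" "s (Suc i) \<le> b" using part_range[OF P, of i] part_range[OF P, of "Suc i"] that by auto
    moreover have "s i \<le> s (Suc i)" using P that unfolding part_def by (auto simp: less_imp_le)
    ultimately show ?thesis unfolding ov_def using part_row[OF Q] by simp
  qed
  have r2: "s' (Suc k) - s' k = (\<Sum>i<n. ov i k)" if "k < m" for k
  proof -
    have "a \<le> s' k" "s' (Suc k) \<le> b" using part_range[OF Q, of k] part_range[OF Q, of "Suc k"] that by auto
    moreover have "s' k \<le> s' (Suc k)" using Q that unfolding part_def by (auto simp: less_imp_le)
    ultimately have "(\<Sum>i<n. ovl (s' k) (s' (Suc k)) (s i) (s (Suc i))) = s' (Suc k) - s' k"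
      using part_row[OF P] by simp
    moreover have "(\<Sum>i<n. ovl (s i) (s (Suc i)) (s' k) (s' (Suc k))) = (\<Sum>i<n. ovl (s' k) (s' (Suc k)) (s i) (s (Suc i)))"
      by (intro sum.cong refl) (rule ovl_sym)
    ultimately show ?thesis unfolding ov_def by simp
  qed
  have e1: "RS y n s \<tau> = (\<Sum>p\<in>{..<n}\<times>{..<m}. sm (rsc (ov (fst p) (snd p))) (T (\<tau> (fst p)) y))"
  proof -
    have "RS y n s \<tau> = (\<Sum>i<n. \<Sum>k<m. sm (rsc (ov i k)) (T (\<tau> i) y))"
      unfolding RS_def by (intro sum.cong) (auto simp: r1 rsc_sum)
    also have "\<dots> = (\<Sum>p\<in>{..<n}\<times>{..<m}. sm (rsc (ov (fst p) (snd p))) (T (\<tau> (fst p)) y))"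
      by (subst sum.cartesian_product) (simp add: case_prod_beta)
    finally show ?thesis .
  qed
  have e2: "RS y m s' \<tau>' = (\<Sum>p\<in>{..<n}\<times>{..<m}. sm (rsc (ov (fst p) (snd p))) (T (\<tau>' (snd p)) y))"
  proof -
    have "RS y m s' \<tau>' = (\<Sum>k<m. \<Sum>i<n. sm (rsc (ov i k)) (T (\<tau>' k) y))"
      unfolding RS_def by (intro sum.cong) (auto simp: r2 rsc_sum)
    also have "\<dots> = (\<Sum>i<n. \<Sum>k<m. sm (rsc (ov i k)) (T (\<tau>' k) y))" by (rule sum.swap)
    also have "\<dots> = (\<Sum>p\<in>{..<n}\<times>{..<m}. sm (rsc (ov (fst p) (snd p))) (T (\<tau>' (snd p)) y))"
      by (subst sum.cartesian_product) (simp add: case_prod_beta)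
    finally show ?thesis .
  qed
  show ?thesis unfolding e1 e2 ov_def[symmetric] sum_subtractf[symmetric]
    by (intro sum.cong) (auto simp: sm_diff)
qed

lemma RS_close:
  assumes a: "0 \<le> a" and e: "e > 0" and l: "l > 0"
  shows "\<exists>\<delta>>0. \<forall>n s \<tau> m s' \<tau>'. part a b n s \<tau> \<and> mfine \<delta> n s \<and> part a b m s' \<tau>' \<and> mfine \<delta> m s' \<longrightarrow>
            Pm e (RS y n s \<tau> - RS y m s' \<tau>') < l"
proof -
  define e1 where "e1 = e / (\<bar>b - a\<bar> + 1)"
  have e1: "e1 > 0" using e by (simp add: e1_def)
  obtain \<delta> where \<delta>: "\<delta> > 0" and W: "\<And>(I::(nat\<times>nat) set) c a' b'. finite I \<and>
      (\<forall>i\<in>I. 0 \<le> c i \<and> (c i \<noteq> 0 \<longrightarrow> a' i \<in> {0..b} \<and> b' i \<in> {0..b} \<and> \<bar>a' i - b' i\<bar> < \<delta>)) \<Longrightarrow>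
      measure M {w\<in>space M. e1 * (\<Sum>i\<in>I. c i) < nr (\<Sum>i\<in>I. sm (rsc (c i)) (T (a' i) y - T (b' i) y)) w} < l"
    using WS[OF e1 l, of b y] by blast
  show ?thesis
  proof (intro exI[of _ "\<delta>/2"] conjI allI impI)
    show "\<delta>/2 > 0" using \<delta> by simp
    fix n s \<tau> m s' \<tau>'
    assume H: "part a b n s \<tau> \<and> mfine (\<delta>/2) n s \<and> part a b m s' \<tau>' \<and> mfine (\<delta>/2) m s'"
    then have P: "part a b n s \<tau>" and Q: "part a b m s' \<tau>'" and fP: "mfine (\<delta>/2) n s" and fQ: "mfine (\<delta>/2) m s'"
      by auto
    define c where "c p = ovl (s (fst p)) (s (Suc (fst p))) (s' (snd p)) (s' (Suc (snd p)))" for p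
    define I where "I = {..<n}\<times>{..<m}"
    have sumc: "(\<Sum>p\<in>I. c p) = b - a"
    proof -
      have "(\<Sum>p\<in>I. c p) = (\<Sum>i<n. \<Sum>k<m. ovl (s i) (s (Suc i)) (s' k) (s' (Suc k)))"
        unfolding I_def c_def by (subst sum.cartesian_product) (simp add: case_prod_beta)
      also have "\<dots> = (\<Sum>i<n. s (Suc i) - s i)"
      proof (intro sum.cong refl)
        fix i assume i: "i \<in> {..<n}"
        have "a \<le> s i" "s (Suc i) \<le> b" using part_range[OF P, of i] part_range[OF P, of "Suc i"] i by auto
        moreover have "s i \<le> s (Suc i)" using P i unfolding part_def by (auto simp: less_imp_le)
        ultimately show "(\<Sum>k<m. ovl (s i) (s (Suc i)) (s' k) (s' (Suc k))) = s (Suc i) - s i"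
          using part_row[OF Q] by simp
      qed
      also have "\<dots> = b - a" by (rule part_sum[OF P])
      finally show ?thesis .
    qed
    have ab: "a \<le> b" using part_le[OF P] .
    have "Pm e (RS y n s \<tau> - RS y m s' \<tau>')
      \<le> measure M {w\<in>space M. e1 * (\<Sum>p\<in>I. c p) < nr (\<Sum>p\<in>I. sm (rsc (c p)) (T (\<tau> (fst p)) y - T (\<tau>' (snd p)) y)) w}"
    proof (rule meas_le1)
      have "e1 * (\<Sum>p\<in>I. c p) < e"
      proof -
        have "e1 * (b - a) = e * ((b - a) / (b - a + 1))" using ab by (simp add: e1_def)
        also have "\<dots> < e * 1" using e ab by (intro mult_strict_left_mono) auto
        finally show ?thesis using sumc by simp
      qed
      then show "AE w in M. e \<le> nr (RS y n s \<tau> - RS y m s' \<tau>') w \<longrightarrow>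
          e1 * (\<Sum>p\<in>I. c p) < nr (\<Sum>p\<in>I. sm (rsc (c p)) (T (\<tau> (fst p)) y - T (\<tau>' (snd p)) y)) w"
        unfolding DS[OF P Q] I_def c_def by (intro AE_I2) auto
    qed simp
    also have "\<dots> < l"
    proof (rule W)
      show "finite I \<and> (\<forall>p\<in>I. 0 \<le> c p \<and> (c p \<noteq> 0 \<longrightarrow> \<tau> (fst p) \<in> {0..b} \<and> \<tau>' (snd p) \<in> {0..b} \<and>
              \<bar>\<tau> (fst p) - \<tau>' (snd p)\<bar> < \<delta>))"
      proof (intro conjI ballI impI)
        show "finite I" unfolding I_def by simp
        fix p assume p: "p \<in> I"
        then have i: "fst p < n" and k: "snd p < m" unfolding I_def by auto
        show "0 \<le> c p" unfolding c_def by (rule ovl_nonneg)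
        show "\<tau> (fst p) \<in> {0..b}" using part_tau[OF P i] a by auto
        show "\<tau>' (snd p) \<in> {0..b}" using part_tau[OF Q k] a by auto
        assume "c p \<noteq> 0"
        then have "\<bar>\<tau> (fst p) - \<tau>' (snd p)\<bar> \<le> (s (Suc (fst p)) - s (fst p)) + (s' (Suc (snd p)) - s' (snd p))"
          unfolding c_def using P Q i k unfolding part_def by (intro ovl_close) auto
        also have "\<dots> < \<delta>/2 + \<delta>/2" using fP fQ i k unfolding mfine_def by (intro add_strict_mono) auto
        finally show "\<bar>\<tau> (fst p) - \<tau>' (snd p)\<bar> < \<delta>" by simp
      qed
    qed
    finally show "Pm e (RS y n s \<tau> - RS y m s' \<tau>') < l" .
  qed
qed

lemma RI_exists:
  assumes a: "0 \<le> a" and ab: "a < b"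
  shows "\<exists>J. RI y a b J"
proof -
  define U where "U N = RS y (Suc N) (us a b N) (us a b N)" for N
  have "\<exists>J. rn_tendsto M nr U J sequentially"
  proof -
    have "\<forall>e>0. \<forall>lam>0. \<exists>N. \<forall>m\<ge>N. \<forall>n\<ge>N. measure M {w\<in>space M. e \<le> nr (U m - U n) w} < lam"
    proof (intro allI impI)
      fix e lam :: real assume e: "e > 0" and l: "lam > 0"
      obtain \<delta> where \<delta>: "\<delta> > 0" and C: "\<And>n s \<tau> m s' \<tau>'. part a b n s \<tau> \<and> mfine \<delta> n s \<and> part a b m s' \<tau>' \<and> mfine \<delta> m s' \<Longrightarrow>
            Pm e (RS y n s \<tau> - RS y m s' \<tau>') < lam"
        using RS_close[OF a e l, of b y] by blast
      obtain N0 where N0: "\<And>N. N \<ge> N0 \<Longrightarrow> (b - a) / real (Suc N) < \<delta>"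
        using ex_fine[OF \<delta>, of b a] unfolding eventually_sequentially by blast
      show "\<exists>N. \<forall>m\<ge>N. \<forall>n\<ge>N. measure M {w\<in>space M. e \<le> nr (U m - U n) w} < lam"
      proof (intro exI[of _ N0] allI impI)
        fix m' n' assume mn: "m' \<ge> N0" "n' \<ge> N0"
        show "Pm e (U m' - U n') < lam" unfolding U_def
          by (rule C) (use us_part[OF ab] us_fine N0 mn in auto)
      qed
    qed
    then show ?thesis using cpl unfolding rn_complete_def by blast
  qed
  then obtain J where J: "rn_tendsto M nr U J sequentially" by blast
  have "RI y a b J"
    unfolding RI_iff
  proof (intro allI impI)
    fix e l :: real assume e: "e > 0" and l: "l > 0"
    obtain \<delta> where \<delta>: "\<delta> > 0" and C: "\<And>n s \<tau> m s' \<tau>'. part a b n s \<tau> \<and> mfine \<delta> n s \<and> part a b m s' \<tau>' \<and> mfine \<delta> m s' \<Longrightarrow>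
          Pm (e/2) (RS y n s \<tau> - RS y m s' \<tau>') < l/2"
      using RS_close[OF a, of "e/2" "l/2" b y] e l by auto
    show "\<exists>\<delta>>0. \<forall>n s \<tau>. part a b n s \<tau> \<and> mfine \<delta> n s \<longrightarrow> Pm e (RS y n s \<tau> - J) < l"
    proof (intro exI[of _ \<delta>] conjI allI impI)
      show "\<delta> > 0" by (rule \<delta>)
      fix n s \<tau> assume P: "part a b n s \<tau> \<and> mfine \<delta> n s"
      have ev1: "eventually (\<lambda>N. Pm (e/2) (U N - J) < l/2) sequentially"
        using rn_tendstoD[OF J, of "e/2" "l/2"] e l by simp
      have "eventually (\<lambda>N. Pm (e/2) (U N - J) < l/2 \<and> (b - a) / real (Suc N) < \<delta>) sequentially"
        using ev1 ex_fine[OF \<delta>, of b a] by eventually_elim auto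
      then obtain N0 where "\<forall>N\<ge>N0. Pm (e/2) (U N - J) < l/2 \<and> (b - a) / real (Suc N) < \<delta>"
        unfolding eventually_sequentially by auto
      then have N: "Pm (e/2) (U N0 - J) < l/2" "(b - a) / real (Suc N0) < \<delta>" by auto
      have "Pm e (RS y n s \<tau> - J) \<le> Pm (e/2) (RS y n s \<tau> - U N0) + Pm (e/2) (U N0 - J)"
        by (rule tri_meas)
      also have "Pm (e/2) (RS y n s \<tau> - U N0) < l/2"
        unfolding U_def by (rule C) (use P us_part[OF ab] us_fine[OF N(2)] in auto)
      finally show "Pm e (RS y n s \<tau> - J) < l" using N(1) by linarith
    qed
  qed
  then show ?thesis by blast
qed

end



definition cat :: "nat \<Rightarrow> (nat \<Rightarrow> real) \<Rightarrow> (nat \<Rightarrow> real) \<Rightarrow> nat \<Rightarrow> real" where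
  "cat n1 s1 s2 i = (if i \<le> n1 then s1 i else s2 (i - n1))"

definition catt :: "nat \<Rightarrow> (nat \<Rightarrow> real) \<Rightarrow> (nat \<Rightarrow> real) \<Rightarrow> nat \<Rightarrow> real" where
  "catt n1 t1 t2 i = (if i < n1 then t1 i else t2 (i - n1))"

lemma sum_split_add: "(\<Sum>i<(n1::nat)+n2. f i) = (\<Sum>i<n1. f i) + (\<Sum>i<n2. f (n1 + i))"
  by (induction n2) (simp_all add: add.assoc)

lemma cat_lo: "i \<le> n1 \<Longrightarrow> cat n1 s1 s2 i = s1 i" unfolding cat_def by simp

lemma cat_hi: "s1 n1 = s2 0 \<Longrightarrow> cat n1 s1 s2 (n1 + i) = s2 i"
  unfolding cat_def by auto

lemma cat_part:
  assumes P1: "part a b n1 s1 t1" and P2: "part b c n2 s2 t2"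
  shows "part a c (n1 + n2) (cat n1 s1 s2) (catt n1 t1 t2)"
proof -
  have j: "s1 n1 = s2 0" using P1 P2 unfolding part_def by simp
  have "cat n1 s1 s2 i < cat n1 s1 s2 (Suc i) \<and> cat n1 s1 s2 i \<le> catt n1 t1 t2 i \<and> catt n1 t1 t2 i \<le> cat n1 s1 s2 (Suc i)"
    if i: "i < n1 + n2" for i
  proof (cases "i < n1")
    case True
    then show ?thesis using P1 unfolding part_def cat_def catt_def by auto
  next
    case False
    then obtain k where k: "i = n1 + k" "k < n2" using i by (metis add_diff_inverse_nat add_less_cancel_left)
    have "cat n1 s1 s2 i = s2 k" using k j cat_hi by simp
    moreover have "cat n1 s1 s2 (Suc i) = s2 (Suc k)" using k j cat_hi[where i="Suc k"] by simp
    moreover have "catt n1 t1 t2 i = t2 k" using k unfolding catt_def by simp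
    ultimately show ?thesis using P2 k unfolding part_def by auto
  qed
  moreover have "cat n1 s1 s2 0 = a" using P1 unfolding part_def cat_def by simp
  moreover have "cat n1 s1 s2 (n1 + n2) = c" using P2 j cat_hi[where i=n2] unfolding part_def by simp
  ultimately show ?thesis unfolding part_def by blast
qed

lemma cat_fine:
  assumes P1: "part a b n1 s1 t1" and P2: "part b c n2 s2 t2" and f1: "mfine d n1 s1" and f2: "mfine d n2 s2"
  shows "mfine d (n1 + n2) (cat n1 s1 s2)"
  unfolding mfine_def
proof (intro allI impI)
  fix i assume i: "i < n1 + n2"
  have j: "s1 n1 = s2 0" using P1 P2 unfolding part_def by simp
  show "cat n1 s1 s2 (Suc i) - cat n1 s1 s2 i < d"
  proof (cases "i < n1")
    case True
    then show ?thesis using f1 unfolding mfine_def cat_def by auto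
  next
    case False
    then obtain k where k: "i = n1 + k" "k < n2" using i by (metis add_diff_inverse_nat add_less_cancel_left)
    have "cat n1 s1 s2 i = s2 k" using k j cat_hi by simp
    moreover have "cat n1 s1 s2 (Suc i) = s2 (Suc k)" using k j cat_hi[where i="Suc k"] by simp
    ultimately show ?thesis using f2 k unfolding mfine_def by auto
  qed
qed

context sg begin

lemma cat_RS:
  assumes P1: "part a b n1 s1 t1" and P2: "part b c n2 s2 t2"
  shows "RS y (n1 + n2) (cat n1 s1 s2) (catt n1 t1 t2) = RS y n1 s1 t1 + RS y n2 s2 t2"
proof -
  have j: "s1 n1 = s2 0" using P1 P2 unfolding part_def by simp
  show ?thesis unfolding RS_def sum_split_add
  proof (intro arg_cong2[where f="(+)"] sum.cong refl)
    fix i assume "i \<in> {..<n1}"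
    then show "sm (rsc (cat n1 s1 s2 (Suc i) - cat n1 s1 s2 i)) (T (catt n1 t1 t2 i) y)
             = sm (rsc (s1 (Suc i) - s1 i)) (T (t1 i) y)"
      unfolding cat_def catt_def by auto
  next
    fix i assume "i \<in> {..<n2}"
    have "cat n1 s1 s2 (n1 + i) = s2 i" using j cat_hi by simp
    moreover have "cat n1 s1 s2 (Suc (n1 + i)) = s2 (Suc i)" using j cat_hi[where i="Suc i"] by simp
    moreover have "catt n1 t1 t2 (n1 + i) = t2 i" unfolding catt_def by simp
    ultimately show "sm (rsc (cat n1 s1 s2 (Suc (n1 + i)) - cat n1 s1 s2 (n1 + i))) (T (catt n1 t1 t2 (n1 + i)) y)
             = sm (rsc (s2 (Suc i) - s2 i)) (T (t2 i) y)" by simp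
  qed
qed

lemma Pm_comm: "Pm e (x - y) = Pm e (y - x)"
  by (rule finite_measure_eq_AE) (use nr_comm[of x y] in \<open>auto elim!: AE_mp\<close>)

lemma uniform_ex:
  assumes ab: "a < b" and d: "d > 0"
  shows "\<exists>n s \<tau>. part a b n s \<tau> \<and> mfine d n s"
proof -
  obtain N0 where "\<forall>N\<ge>N0. (b - a) / real (Suc N) < d"
    using ex_fine[OF d, of b a] unfolding eventually_sequentially by auto
  then show ?thesis using us_part[OF ab] us_fine by blast
qed

lemma RI_unique:
  assumes ab: "a < b" and J1: "RI y a b J1" and J2: "RI y a b J2"
  shows "J1 = J2"
proof -
  have "J1 - J2 = 0"
  proof (rule small_eq_zero)
    fix e l :: real assume e: "e > 0" and l: "l > 0"
    obtain d1 where d1: "d1 > 0" "\<forall>n s \<tau>. part a b n s \<tau> \<and> mfine d1 n s \<longrightarrow> Pm (e/2) (RS y n s \<tau> - J1) < l/2"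
      using J1[unfolded RI_iff, rule_format, of "e/2" "l/2"] e l by auto
    obtain d2 where d2: "d2 > 0" "\<forall>n s \<tau>. part a b n s \<tau> \<and> mfine d2 n s \<longrightarrow> Pm (e/2) (RS y n s \<tau> - J2) < l/2"
      using J2[unfolded RI_iff, rule_format, of "e/2" "l/2"] e l by auto
    obtain n s \<tau> where P: "part a b n s \<tau>" "mfine (min d1 d2) n s"
      using uniform_ex[OF ab, of "min d1 d2"] d1 d2 by auto
    have f1: "mfine d1 n s" "mfine d2 n s" using P(2) unfolding mfine_def by auto
    have "Pm e (J1 - J2) \<le> Pm (e/2) (J1 - RS y n s \<tau>) + Pm (e/2) (RS y n s \<tau> - J2)" by (rule tri_meas)
    also have "\<dots> = Pm (e/2) (RS y n s \<tau> - J1) + Pm (e/2) (RS y n s \<tau> - J2)"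
      using Pm_comm[of "e/2" J1 "RS y n s \<tau>"] by (simp only:)
    also have "\<dots> < l" using d1(2)[rule_format, OF conjI[OF P(1) f1(1)]] d2(2)[rule_format, OF conjI[OF P(1) f1(2)]]
      by linarith
    finally show "Pm e (J1 - J2) < l" .
  qed
  then show ?thesis by simp
qed

definition Itg :: "'a \<Rightarrow> real \<Rightarrow> real \<Rightarrow> 'a" where
  "Itg y a b = (THE J. RI y a b J)"

lemma Itg_RI: "0 \<le> a \<Longrightarrow> a < b \<Longrightarrow> RI y a b (Itg y a b)"
  unfolding Itg_def using RI_exists[of a b y] RI_unique[of a b y] by (metis theI)

lemma Itg_eq: "0 \<le> a \<Longrightarrow> a < b \<Longrightarrow> RI y a b J \<Longrightarrow> Itg y a b = J"
  using Itg_RI RI_unique by blast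

end


context sg begin

lemma part_tau0: "part a b n s \<tau> \<Longrightarrow> 0 \<le> a \<Longrightarrow> i < n \<Longrightarrow> 0 \<le> \<tau> i"
  using part_tau[of a b n s \<tau> i] by auto

lemma Pm_diff2: "Pm e ((u1 - v1) - (u2 - v2)) \<le> Pm (e/2) (u1 - v1) + Pm (e/2) (u2 - v2)"
proof -
  have "Pm e ((u1 - v1) - (u2 - v2)) \<le> Pm (e/2) ((u1 - v1) - 0) + Pm (e/2) (0 - (u2 - v2))"
    by (rule tri_meas)
  also have "Pm (e/2) (0 - (u2 - v2)) = Pm (e/2) ((u2 - v2) - 0)" by (rule Pm_comm)
  finally show ?thesis by simp
qed

lemma Pm_add2: "Pm e ((u1 + u2) - (v1 + v2)) \<le> Pm (e/2) (u1 - v1) + Pm (e/2) (u2 - v2)"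
proof (rule meas_le2)
  have eq: "(u1 + u2) - (v1 + v2) = (u1 - v1) + (u2 - v2)" by (simp add: algebra_simps)
  show "AE w in M. e \<le> nr (u1 + u2 - (v1 + v2)) w \<longrightarrow> e / 2 \<le> nr (u1 - v1) w \<or> e / 2 \<le> nr (u2 - v2) w"
    using nr_add_le[of "u1 - v1" "u2 - v2"] unfolding eq by eventually_elim linarith
qed simp_all

lemma Pm_sm: "e > 0 \<Longrightarrow> Pm e (sm (rsc c) z) \<le> Pm (e / (\<bar>c\<bar> + 1)) z"
proof (rule meas_le1)
  assume e: "e > 0"
  show "AE w in M. e \<le> nr (sm (rsc c) z) w \<longrightarrow> e / (\<bar>c\<bar> + 1) \<le> nr z w"
    using nr_rsc[of c z] nr_nonneg[of z]
  proof eventually_elim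
    case (elim w)
    show ?case
    proof
      assume "e \<le> nr (sm (rsc c) z) w"
      then have "e \<le> \<bar>c\<bar> * nr z w" using elim by simp
      also have "\<dots> \<le> (\<bar>c\<bar> + 1) * nr z w" using elim by (intro mult_right_mono) auto
      finally show "e / (\<bar>c\<bar> + 1) \<le> nr z w" by (simp add: divide_le_eq mult.commute)
    qed
  qed
qed simp

lemma RS_diff: "part a b n s \<tau> \<Longrightarrow> 0 \<le> a \<Longrightarrow> RS (y1 - y2) n s \<tau> = RS y1 n s \<tau> - RS y2 n s \<tau>"
  unfolding RS_def sum_subtractf[symmetric]
  by (intro sum.cong refl) (simp add: T_diff sm_diff part_tau0)

lemma RS_scale: "part a b n s \<tau> \<Longrightarrow> 0 \<le> a \<Longrightarrow> RS (sm (rsc c) y) n s \<tau> = sm (rsc c) (RS y n s \<tau>)"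
  unfolding RS_def sm_sum[OF rsc_L0]
  by (intro sum.cong refl) (simp add: T_rsc part_tau0 rsc_mult mult.commute)

lemma RS_T: "part a b n s \<tau> \<Longrightarrow> 0 \<le> a \<Longrightarrow> 0 \<le> h \<Longrightarrow> RS (T h y) n s \<tau> = T h (RS y n s \<tau>)"
  unfolding RS_def T_sum
  by (intro sum.cong refl) (simp add: T_rsc part_tau0 T_comm)

lemma RI_diff:
  assumes a: "0 \<le> a" and J1: "RI y1 a b J1" and J2: "RI y2 a b J2"
  shows "RI (y1 - y2) a b (J1 - J2)"
  unfolding RI_iff
proof (intro allI impI)
  fix e l :: real assume e: "e > 0" and l: "l > 0"
  obtain d1 where d1: "d1 > 0" "\<forall>n s \<tau>. part a b n s \<tau> \<and> mfine d1 n s \<longrightarrow> Pm (e/2) (RS y1 n s \<tau> - J1) < l/2"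
    using J1[unfolded RI_iff, rule_format, of "e/2" "l/2"] e l by auto
  obtain d2 where d2: "d2 > 0" "\<forall>n s \<tau>. part a b n s \<tau> \<and> mfine d2 n s \<longrightarrow> Pm (e/2) (RS y2 n s \<tau> - J2) < l/2"
    using J2[unfolded RI_iff, rule_format, of "e/2" "l/2"] e l by auto
  show "\<exists>\<delta>>0. \<forall>n s \<tau>. part a b n s \<tau> \<and> mfine \<delta> n s \<longrightarrow> Pm e (RS (y1 - y2) n s \<tau> - (J1 - J2)) < l"
  proof (intro exI[of _ "min d1 d2"] conjI allI impI)
    show "min d1 d2 > 0" using d1 d2 by simp
    fix n s \<tau> assume P: "part a b n s \<tau> \<and> mfine (min d1 d2) n s"
    then have f: "mfine d1 n s" "mfine d2 n s" unfolding mfine_def by auto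
    have "Pm e (RS (y1 - y2) n s \<tau> - (J1 - J2)) = Pm e ((RS y1 n s \<tau> - J1) - (RS y2 n s \<tau> - J2))"
    proof -
      have "RS (y1 - y2) n s \<tau> - (J1 - J2) = (RS y1 n s \<tau> - J1) - (RS y2 n s \<tau> - J2)"
        unfolding RS_diff[OF conjunct1[OF P] a] by (simp add: algebra_simps)
      then show ?thesis by (simp only:)
    qed
    also have "\<dots> \<le> Pm (e/2) (RS y1 n s \<tau> - J1) + Pm (e/2) (RS y2 n s \<tau> - J2)" by (rule Pm_diff2)
    also have "\<dots> < l" using d1(2)[rule_format, OF conjI[OF conjunct1[OF P] f(1)]]
        d2(2)[rule_format, OF conjI[OF conjunct1[OF P] f(2)]] by linarith
    finally show "Pm e (RS (y1 - y2) n s \<tau> - (J1 - J2)) < l" .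
  qed
qed

lemma RI_scale:
  assumes a: "0 \<le> a" and J: "RI y a b J"
  shows "RI (sm (rsc c) y) a b (sm (rsc c) J)"
  unfolding RI_iff
proof (intro allI impI)
  fix e l :: real assume e: "e > 0" and l: "l > 0"
  obtain d where d: "d > 0" "\<forall>n s \<tau>. part a b n s \<tau> \<and> mfine d n s \<longrightarrow> Pm (e / (\<bar>c\<bar> + 1)) (RS y n s \<tau> - J) < l"
    using J[unfolded RI_iff, rule_format, of "e / (\<bar>c\<bar> + 1)" l] e l by auto
  show "\<exists>\<delta>>0. \<forall>n s \<tau>. part a b n s \<tau> \<and> mfine \<delta> n s \<longrightarrow> Pm e (RS (sm (rsc c) y) n s \<tau> - sm (rsc c) J) < l"
  proof (intro exI[of _ d] conjI allI impI)
    show "d > 0" by (rule d)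
    fix n s \<tau> assume P: "part a b n s \<tau> \<and> mfine d n s"
    have "Pm e (RS (sm (rsc c) y) n s \<tau> - sm (rsc c) J) = Pm e (sm (rsc c) (RS y n s \<tau> - J))"
      using RS_scale[OF conjunct1[OF P] a] by (simp add: sm_diff)
    also have "\<dots> \<le> Pm (e / (\<bar>c\<bar> + 1)) (RS y n s \<tau> - J)" using e by (rule Pm_sm)
    also have "\<dots> < l" using d(2) P by blast
    finally show "Pm e (RS (sm (rsc c) y) n s \<tau> - sm (rsc c) J) < l" .
  qed
qed

lemma RI_T:
  assumes a: "0 \<le> a" and h: "0 \<le> h" and J: "RI y a b J"
  shows "RI (T h y) a b (T h J)"
  unfolding RI_iff
proof (intro allI impI)
  fix e l :: real assume e: "e > 0" and l: "l > 0"
  obtain \<Xi> where \<Xi>m[measurable]: "\<Xi> \<in> borel_measurable M" and \<Xi>1: "AE w in M. 1 \<le> \<Xi> w"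
    and \<Xi>b: "\<forall>s\<in>{0..h}. \<forall>x. AE w in M. nr (T s x) w \<le> \<Xi> w * nr x w"
    using Tbound[of h] by blast
  have \<Xi>0: "AE w in M. 0 \<le> \<Xi> w" using \<Xi>1 by eventually_elim simp
  obtain C where C: "C > 0" "measure M {w\<in>space M. C \<le> \<Xi> w} < l/2"
    using big_small[OF \<Xi>m, of "l/2"] l by auto
  obtain d where d: "d > 0" "\<forall>n s \<tau>. part a b n s \<tau> \<and> mfine d n s \<longrightarrow> Pm (e / C) (RS y n s \<tau> - J) < l/2"
    using J[unfolded RI_iff, rule_format, of "e / C" "l/2"] e l C by auto
  show "\<exists>\<delta>>0. \<forall>n s \<tau>. part a b n s \<tau> \<and> mfine \<delta> n s \<longrightarrow> Pm e (RS (T h y) n s \<tau> - T h J) < l"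
  proof (intro exI[of _ d] conjI allI impI)
    show "d > 0" by (rule d)
    fix n s \<tau> assume P: "part a b n s \<tau> \<and> mfine d n s"
    have "Pm e (RS (T h y) n s \<tau> - T h J) = Pm e (T h (RS y n s \<tau> - J))"
      using RS_T[OF conjunct1[OF P] a h] h by (simp add: T_diff)
    also have "\<dots> \<le> measure M {w\<in>space M. e \<le> \<Xi> w * nr (RS y n s \<tau> - J) w}"
    proof (rule meas_le1)
      have "AE w in M. nr (T h (RS y n s \<tau> - J)) w \<le> \<Xi> w * nr (RS y n s \<tau> - J) w" using \<Xi>b h by simp
      then show "AE w in M. e \<le> nr (T h (RS y n s \<tau> - J)) w \<longrightarrow> e \<le> \<Xi> w * nr (RS y n s \<tau> - J) w"
        by eventually_elim linarith
    qed simp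
    also have "\<dots> \<le> measure M {w\<in>space M. C \<le> \<Xi> w} + Pm (e / C) (RS y n s \<tau> - J)"
      by (rule prod_bound) (use \<Xi>0 C e in auto)
    also have "\<dots> < l" using C d(2) P by fastforce
    finally show "Pm e (RS (T h y) n s \<tau> - T h J) < l" .
  qed
qed

lemma RI_shift:
  assumes a: "0 \<le> a" and h: "0 \<le> h" and J: "RI (T h y) a b J"
  shows "RI y (a + h) (b + h) J"
  unfolding RI_iff
proof (intro allI impI)
  fix e l :: real assume e: "e > 0" and l: "l > 0"
  obtain d where d: "d > 0" "\<forall>n s \<tau>. part a b n s \<tau> \<and> mfine d n s \<longrightarrow> Pm e (RS (T h y) n s \<tau> - J) < l"
    using J[unfolded RI_iff, rule_format, of e l] e l by auto
  show "\<exists>\<delta>>0. \<forall>n s \<tau>. part (a + h) (b + h) n s \<tau> \<and> mfine \<delta> n s \<longrightarrow> Pm e (RS y n s \<tau> - J) < l"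
  proof (intro exI[of _ d] conjI allI impI)
    show "d > 0" by (rule d)
    fix n s \<tau> assume P: "part (a + h) (b + h) n s \<tau> \<and> mfine d n s"
    define s' where "s' i = s i - h" for i
    define \<tau>' where "\<tau>' i = \<tau> i - h" for i
    have P': "part a b n s' \<tau>'" using P unfolding part_def s'_def \<tau>'_def by auto
    have f': "mfine d n s'" using P unfolding mfine_def s'_def by auto
    have "RS (T h y) n s' \<tau>' = RS y n s \<tau>"
      unfolding RS_def
    proof (intro sum.cong refl)
      fix i assume i: "i \<in> {..<n}"
      have "0 \<le> \<tau>' i" using part_tau0[OF P' a] i by simp
      then have "T (\<tau>' i) (T h y) = T (\<tau> i) y" using h unfolding \<tau>'_def by (simp add: T_semi)
      then show "sm (rsc (s' (Suc i) - s' i)) (T (\<tau>' i) (T h y)) = sm (rsc (s (Suc i) - s i)) (T (\<tau> i) y)"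
        unfolding s'_def by simp
    qed
    then show "Pm e (RS y n s \<tau> - J) < l" using d(2) P' f' by metis
  qed
qed

lemma RI_add:
  assumes a: "0 \<le> a" and ab: "a < b" and bc: "b < c" and J1: "RI y a b J1" and J2: "RI y b c J2"
  shows "RI y a c (J1 + J2)"
proof -
  have ac: "a < c" using ab bc by simp
  define J3 where "J3 = Itg y a c"
  have J3: "RI y a c J3" unfolding J3_def using Itg_RI a ac by blast
  have "J3 - (J1 + J2) = 0"
  proof (rule small_eq_zero)
    fix e l :: real assume e: "e > 0" and l: "l > 0"
    obtain d1 where d1: "d1 > 0" "\<forall>n s \<tau>. part a b n s \<tau> \<and> mfine d1 n s \<longrightarrow> Pm (e/2/2) (RS y n s \<tau> - J1) < l/3"
      using J1[unfolded RI_iff, rule_format, of "e/2/2" "l/3"] e l by auto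
    obtain d2 where d2: "d2 > 0" "\<forall>n s \<tau>. part b c n s \<tau> \<and> mfine d2 n s \<longrightarrow> Pm (e/2/2) (RS y n s \<tau> - J2) < l/3"
      using J2[unfolded RI_iff, rule_format, of "e/2/2" "l/3"] e l by auto
    obtain d3 where d3: "d3 > 0" "\<forall>n s \<tau>. part a c n s \<tau> \<and> mfine d3 n s \<longrightarrow> Pm (e/2) (RS y n s \<tau> - J3) < l/3"
      using J3[unfolded RI_iff, rule_format, of "e/2" "l/3"] e l by auto
    define d where "d = min d1 (min d2 d3)"
    have d: "d > 0" using d1 d2 d3 by (simp add: d_def)
    obtain n1 s1 t1 where P1: "part a b n1 s1 t1" "mfine d n1 s1" using uniform_ex[OF ab d] by blast
    obtain n2 s2 t2 where P2: "part b c n2 s2 t2" "mfine d n2 s2" using uniform_ex[OF bc d] by blast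
    have f1: "mfine d1 n1 s1" using P1(2) unfolding mfine_def d_def by auto
    have f2: "mfine d2 n2 s2" using P2(2) unfolding mfine_def d_def by auto
    have P: "part a c (n1 + n2) (cat n1 s1 s2) (catt n1 t1 t2)" by (rule cat_part[OF P1(1) P2(1)])
    have f: "mfine d (n1 + n2) (cat n1 s1 s2)" by (rule cat_fine[OF P1(1) P2(1) P1(2) P2(2)])
    have f3: "mfine d3 (n1 + n2) (cat n1 s1 s2)" using f unfolding mfine_def d_def by auto
    define R where "R = RS y (n1 + n2) (cat n1 s1 s2) (catt n1 t1 t2)"
    have R: "R = RS y n1 s1 t1 + RS y n2 s2 t2" unfolding R_def by (rule cat_RS[OF P1(1) P2(1)])
    have "Pm e (J3 - (J1 + J2)) \<le> Pm (e/2) (J3 - R) + Pm (e/2) (R - (J1 + J2))" by (rule tri_meas)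
    also have "Pm (e/2) (J3 - R) = Pm (e/2) (R - J3)" by (rule Pm_comm)
    also have "Pm (e/2) (R - (J1 + J2)) \<le> Pm (e/2/2) (RS y n1 s1 t1 - J1) + Pm (e/2/2) (RS y n2 s2 t2 - J2)"
      unfolding R by (rule Pm_add2)
    also have "Pm (e/2) (R - J3) < l/3" using d3(2) P f3 unfolding R_def by blast
    also have "Pm (e/2/2) (RS y n1 s1 t1 - J1) < l/3" using d1(2) P1(1) f1 by blast
    also have "Pm (e/2/2) (RS y n2 s2 t2 - J2) < l/3" using d2(2) P2(1) f2 by blast
    finally show "Pm e (J3 - (J1 + J2)) < l" by simp
  qed
  then have "J3 = J1 + J2" by simp
  then show ?thesis using J3 by simp
qed

end


context sg begin

lemma mean_lim:
  assumes a: "0 \<le> a"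
  shows "rn_tendsto M nr (\<lambda>h. sm (rsc (1/h)) (Itg y a (a + h))) (T a y) (at_right 0)"
proof (rule rn_tendstoI)
  fix e l :: real assume e: "e > 0" and l: "l > 0"
  obtain \<delta> where \<delta>: "\<delta> > 0" and W: "\<And>(I::nat set) c a' b'. finite I \<and>
      (\<forall>i\<in>I. 0 \<le> c i \<and> (c i \<noteq> 0 \<longrightarrow> a' i \<in> {0..a+1} \<and> b' i \<in> {0..a+1} \<and> \<bar>a' i - b' i\<bar> < \<delta>)) \<Longrightarrow>
      measure M {w\<in>space M. e/2 * (\<Sum>i\<in>I. c i) < nr (\<Sum>i\<in>I. sm (rsc (c i)) (T (a' i) y - T (b' i) y)) w} < l/2"
    using WS[of "e/2" "l/2" "a+1" y] e l by auto
  show "eventually (\<lambda>h. Pm e (sm (rsc (1/h)) (Itg y a (a + h)) - T a y) < l) (at_right 0)"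
    unfolding eventually_at_right_field
  proof (intro exI[of _ "min \<delta> 1"] conjI allI impI)
    show "0 < min \<delta> 1" using \<delta> by simp
    fix h :: real assume h0: "0 < h" and hd: "h < min \<delta> 1"
    define J where "J = Itg y a (a + h)"
    have J: "RI y a (a + h) J" unfolding J_def using Itg_RI a h0 by simp
    obtain d where d: "d > 0" "\<forall>n s \<tau>. part a (a + h) n s \<tau> \<and> mfine d n s \<longrightarrow> Pm (e*h/2) (RS y n s \<tau> - J) < l/2"
      using J[unfolded RI_iff, rule_format, of "e*h/2" "l/2"] e l h0 by auto
    obtain n s \<tau> where P: "part a (a + h) n s \<tau>" "mfine d n s" using uniform_ex[of a "a + h" d] h0 d by auto
    define X where "X = sm (rsc h) (T a y)"
    define c where "c i = s (Suc i) - s i" for i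
    have sc: "(\<Sum>i\<in>{..<n}. c i) = h" unfolding c_def using part_sum[OF P(1)] by simp
    have RX: "RS y n s \<tau> - X = (\<Sum>i\<in>{..<n}. sm (rsc (c i)) (T (\<tau> i) y - T a y))"
    proof -
      have "X = (\<Sum>i\<in>{..<n}. sm (rsc (c i)) (T a y))" unfolding X_def sc[symmetric] by (rule rsc_sum)
      then show ?thesis unfolding RS_def c_def by (simp add: sum_subtractf[symmetric] sm_diff)
    qed
    have eqq: "sm (rsc (1/h)) J - T a y = sm (rsc (1/h)) (J - X)"
      unfolding X_def using h0 by (simp add: sm_diff rsc_mult)
    have "Pm e (sm (rsc (1/h)) J - T a y)
        \<le> Pm (e*h/2) (RS y n s \<tau> - J) + measure M {w\<in>space M. e/2 * (\<Sum>i\<in>{..<n}. c i) <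
              nr (\<Sum>i\<in>{..<n}. sm (rsc (c i)) (T (\<tau> i) y - T a y)) w}"
    proof (rule meas_le2)
      show "AE w in M. e \<le> nr (sm (rsc (1/h)) J - T a y) w \<longrightarrow> e*h/2 \<le> nr (RS y n s \<tau> - J) w \<or>
              e/2 * (\<Sum>i\<in>{..<n}. c i) < nr (\<Sum>i\<in>{..<n}. sm (rsc (c i)) (T (\<tau> i) y - T a y)) w"
        unfolding eqq RX[symmetric] sc
        using nr_rsc[of "1/h" "J - X"] nr_tri_diff[of J X "RS y n s \<tau>"] nr_comm[of J "RS y n s \<tau>"]
      proof eventually_elim
        case (elim w)
        show ?case
        proof (rule impI, rule ccontr)
          assume a1: "e \<le> nr (sm (rsc (1/h)) (J - X)) w"
            and a2: "\<not> (e*h/2 \<le> nr (RS y n s \<tau> - J) w \<or> e/2 * h < nr (RS y n s \<tau> - X) w)"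
          have "e \<le> (1/h) * nr (J - X) w" using a1 elim(1) h0 by simp
          then have "e * h \<le> nr (J - X) w" using h0 by (simp add: field_simps)
          moreover have "nr (J - X) w < e * h" using a2 elim(2,3) by linarith
          ultimately show False by linarith
        qed
      qed
      show "{w \<in> space M. e/2 * (\<Sum>i\<in>{..<n}. c i) < nr (\<Sum>i\<in>{..<n}. sm (rsc (c i)) (T (\<tau> i) y - T a y)) w} \<in> sets M"
        by simp
    qed simp
    also have "\<dots> < l/2 + l/2"
    proof (rule add_strict_mono)
      show "Pm (e*h/2) (RS y n s \<tau> - J) < l/2" using d(2) P by blast
      show "measure M {w\<in>space M. e/2 * (\<Sum>i\<in>{..<n}. c i) <
              nr (\<Sum>i\<in>{..<n}. sm (rsc (c i)) (T (\<tau> i) y - T a y)) w} < l/2"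
      proof (rule W, intro conjI ballI impI)
        fix i assume i: "i \<in> {..<n}"
        show "0 \<le> c i" using P(1) i unfolding part_def c_def by (auto simp: less_imp_le)
        have t: "a \<le> \<tau> i" "\<tau> i \<le> a + h" using part_tau[OF P(1)] i by auto
        show "\<tau> i \<in> {0..a+1}" using t a hd by auto
        show "a \<in> {0..a+1}" using a by auto
        show "\<bar>\<tau> i - a\<bar> < \<delta>" using t hd by auto
      qed simp
    qed
    finally show "Pm e (sm (rsc (1/h)) (Itg y a (a + h)) - T a y) < l" unfolding J_def by simp
  qed
qed

lemma key_eq:
  assumes h: "0 < h" "h < r"
  shows "T h (Itg x 0 r) - Itg x 0 r = Itg x r (r + h) - Itg x 0 h"
proof -
  have r: "0 < r" using h by simp
  have "RI (T h x) 0 r (T h (Itg x 0 r))" using RI_T[of 0 h x r "Itg x 0 r"] Itg_RI[of 0 r x] h r by simp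
  then have "RI x (0 + h) (r + h) (T h (Itg x 0 r))" using RI_shift[of 0 h x r] h by simp
  then have e1: "T h (Itg x 0 r) = Itg x h (r + h)" using Itg_eq[of h "r + h"] h by simp
  have "RI x 0 (r + h) (Itg x 0 h + Itg x h (r + h))"
    using RI_add[OF _ _ _ Itg_RI Itg_RI, of 0 h "r + h" x] h by simp
  then have e2: "Itg x 0 (r + h) = Itg x 0 h + Itg x h (r + h)" using Itg_eq[of 0 "r + h"] h by simp
  have "RI x 0 (r + h) (Itg x 0 r + Itg x r (r + h))"
    using RI_add[OF _ _ _ Itg_RI Itg_RI, of 0 r "r + h" x] h by simp
  then have e3: "Itg x 0 (r + h) = Itg x 0 r + Itg x r (r + h)" using Itg_eq[of 0 "r + h"] h by simp
  have "Itg x 0 h + Itg x h (r + h) = Itg x 0 r + Itg x r (r + h)" using e2 e3 by simp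
  then show ?thesis unfolding e1 by (simp add: algebra_simps)
qed

lemma key:
  assumes r: "0 < r"
  shows "rn_tendsto M nr (\<lambda>h. sm (rsc (1/h)) (T h (Itg x 0 r) - Itg x 0 r)) (T r x - x) (at_right 0)"
proof -
  have "rn_tendsto M nr (\<lambda>h. sm (rsc (1/h)) (Itg x r (r + h)) - sm (rsc (1/h)) (Itg x 0 (0 + h))) (T r x - T 0 x) (at_right 0)"
    by (rule rn_tendsto_diff[OF mean_lim mean_lim]) (use r in auto)
  then have "rn_tendsto M nr (\<lambda>h. sm (rsc (1/h)) (Itg x r (r + h)) - sm (rsc (1/h)) (Itg x 0 h)) (T r x - x) (at_right 0)"
    by simp
  then show ?thesis
  proof (rule rn_tendsto_cong)
    show "eventually (\<lambda>h. sm (rsc (1/h)) (Itg x r (r + h)) - sm (rsc (1/h)) (Itg x 0 h) =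
             sm (rsc (1/h)) (T h (Itg x 0 r) - Itg x 0 r)) (at_right 0)"
      using ev_pos ev_lt[OF r]
    proof eventually_elim
      case (elim h)
      then show ?case by (simp add: key_eq sm_diff)
    qed
  qed
qed

lemma Itg_D: "0 < r \<Longrightarrow> Itg x 0 r \<in> D"
  using key[of r x] unfolding q_def[symmetric] by (rule D_I(1))

lemma density: "rn_dense M nr D"
  unfolding rn_dense_def
proof (intro allI impI)
  fix x and e l :: real assume e: "e > 0" and l: "l > 0"
  have "eventually (\<lambda>r. Pm e (sm (rsc (1/r)) (Itg x 0 (0 + r)) - T 0 x) < l) (at_right 0)"
    using mean_lim[of 0 x] e l by (intro rn_tendstoD) auto
  then obtain b where b: "b > 0" "\<And>r. 0 < r \<Longrightarrow> r < b \<Longrightarrow> Pm e (sm (rsc (1/r)) (Itg x 0 r) - x) < l"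
    unfolding eventually_at_right_field by auto
  define r where "r = b / 2"
  have r: "0 < r" "r < b" using b by (auto simp: r_def)
  define y where "y = sm (rsc (1/r)) (Itg x 0 r)"
  have yD: "y \<in> D" unfolding y_def using D_sm(1)[OF Itg_D[OF r(1)] rsc_L0] .
  have "Pm e (y - x) < l" unfolding y_def using b(2)[OF r] .
  moreover have "measure M {w\<in>space M. nr (y - x) w < e} = 1 - Pm e (y - x)"
  proof -
    have "{w\<in>space M. nr (y - x) w < e} = space M - {w\<in>space M. e \<le> nr (y - x) w}" by auto
    then show ?thesis by (simp add: prob_compl)
  qed
  ultimately have "1 - l < measure M {w\<in>space M. nr (y - x) w < e}" by linarith
  then show "\<exists>y\<in>D. 1 - l < measure M {w\<in>space M. nr (y - x) w < e}" using yD by (intro bexI[of _ y])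
qed

end


context sg begin

lemma Itg_bound:
  assumes a: "0 \<le> a" "a < b" and \<Xi>m[measurable]: "\<Xi> \<in> borel_measurable M"
    and \<Xi>b: "\<forall>t\<in>{0..b}. \<forall>x. AE w in M. nr (T t x) w \<le> \<Xi> w * nr x w" and e: "e > 0"
  shows "Pm e (Itg z a b) \<le> measure M {w\<in>space M. e/2 \<le> (b - a) * \<Xi> w * nr z w}"
proof (rule field_le_epsilon)
  fix l :: real assume l: "l > 0"
  define J where "J = Itg z a b"
  have J: "RI z a b J" unfolding J_def using Itg_RI a by simp
  obtain d where d: "d > 0" "\<forall>n s \<tau>. part a b n s \<tau> \<and> mfine d n s \<longrightarrow> Pm (e/2) (RS z n s \<tau> - J) < l"
    using J[unfolded RI_iff, rule_format, of "e/2" l] e l by auto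
  obtain n s \<tau> where P: "part a b n s \<tau>" "mfine d n s" using uniform_ex[OF a(2) d(1)] by auto
  have "Pm e (J - 0) \<le> Pm (e/2) (J - RS z n s \<tau>) + Pm (e/2) (RS z n s \<tau> - 0)" by (rule tri_meas)
  also have "Pm (e/2) (J - RS z n s \<tau>) = Pm (e/2) (RS z n s \<tau> - J)" by (rule Pm_comm)
  also have "Pm (e/2) (RS z n s \<tau> - J) < l" using d(2) P by blast
  also have "Pm (e/2) (RS z n s \<tau> - 0) \<le> measure M {w\<in>space M. e/2 \<le> (b - a) * \<Xi> w * nr z w}"
  proof (rule meas_le1)
    have AEi: "AE w in M. \<forall>i\<in>{..<n}. nr (T (\<tau> i) z) w \<le> \<Xi> w * nr z w"
    proof (subst AE_finite_all)
      show "\<forall>i\<in>{..<n}. AE w in M. nr (T (\<tau> i) z) w \<le> \<Xi> w * nr z w"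
      proof
        fix i assume i: "i \<in> {..<n}"
        have "a \<le> \<tau> i" "\<tau> i \<le> b" using part_tau[OF P(1), of i] i by auto
        then have "\<tau> i \<in> {0..b}" using a by auto
        then show "AE w in M. nr (T (\<tau> i) z) w \<le> \<Xi> w * nr z w" using \<Xi>b by blast
      qed
    qed simp
    show "AE w in M. e/2 \<le> nr (RS z n s \<tau> - 0) w \<longrightarrow> e/2 \<le> (b - a) * \<Xi> w * nr z w"
      using AEi nr_sum_sm[OF finite_lessThan[of n], of "\<lambda>i. s (Suc i) - s i" "\<lambda>i. T (\<tau> i) z"]
    proof eventually_elim
      case (elim w)
      have "nr (RS z n s \<tau>) w \<le> (\<Sum>i<n. \<bar>s (Suc i) - s i\<bar> * nr (T (\<tau> i) z) w)"
        using elim(2) unfolding RS_def by simp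
      also have "\<dots> \<le> (\<Sum>i<n. (s (Suc i) - s i) * (\<Xi> w * nr z w))"
      proof (rule sum_mono)
        fix i assume i: "i \<in> {..<n}"
        have pos: "0 \<le> s (Suc i) - s i" using P(1) i unfolding part_def by (auto simp: less_imp_le)
        then show "\<bar>s (Suc i) - s i\<bar> * nr (T (\<tau> i) z) w \<le> (s (Suc i) - s i) * (\<Xi> w * nr z w)"
          using elim(1) i by (simp add: mult_left_mono)
      qed
      also have "\<dots> = (b - a) * \<Xi> w * nr z w"
        using part_sum[OF P(1)] by (simp add: sum_distrib_right[symmetric] mult.assoc)
      finally show ?case by simp
    qed
  qed simp
  finally show "Pm e (Itg z a b) \<le> measure M {w\<in>space M. e/2 \<le> (b - a) * \<Xi> w * nr z w} + l"
    unfolding J_def by simp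
qed

lemma int_lim:
  assumes x: "x \<in> D" and r: "0 < r"
  shows "rn_tendsto M nr (\<lambda>h. Itg (q h x) 0 r) (Itg (A x) 0 r) (at_right 0)"
proof (rule rn_tendstoI)
  fix e l :: real assume e: "e > 0" and l: "l > 0"
  obtain \<Xi> where \<Xi>m[measurable]: "\<Xi> \<in> borel_measurable M" and \<Xi>1: "AE w in M. 1 \<le> \<Xi> w"
    and \<Xi>b: "\<forall>s\<in>{0..r}. \<forall>x. AE w in M. nr (T s x) w \<le> \<Xi> w * nr x w"
    using Tbound[of r] by blast
  have m2[measurable]: "(\<lambda>w. r * \<Xi> w) \<in> borel_measurable M" by measurable
  have nn: "AE w in M. 0 \<le> r * \<Xi> w" using \<Xi>1
  proof eventually_elim
    case (elim w) then show ?case using r by simp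
  qed
  obtain C where C: "C > 0" "measure M {w\<in>space M. C \<le> r * \<Xi> w} < l/2"
    using big_small[OF m2, of "l/2"] l by auto
  have "eventually (\<lambda>h. Pm (e/2/C) (q h x - A x) < l/2) (at_right 0)"
    using A_lim[OF x] e l C by (intro rn_tendstoD) auto
  then show "eventually (\<lambda>h. Pm e (Itg (q h x) 0 r - Itg (A x) 0 r) < l) (at_right 0)"
  proof eventually_elim
    case (elim h)
    have "RI (q h x - A x) 0 r (Itg (q h x) 0 r - Itg (A x) 0 r)"
      by (intro RI_diff Itg_RI) (use r in auto)
    then have eq: "Itg (q h x) 0 r - Itg (A x) 0 r = Itg (q h x - A x) 0 r" using Itg_eq r by simp
    have "Pm e (Itg (q h x - A x) 0 r) \<le> measure M {w\<in>space M. e/2 \<le> (r - 0) * \<Xi> w * nr (q h x - A x) w}"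
      by (rule Itg_bound[OF _ r \<Xi>m \<Xi>b e]) simp
    also have "\<dots> = measure M {w\<in>space M. e/2 \<le> (r * \<Xi> w) * nr (q h x - A x) w}" by simp
    also have "\<dots> \<le> measure M {w\<in>space M. C \<le> r * \<Xi> w} + Pm (e/2/C) (q h x - A x)"
      by (rule prod_bound) (use nn C e in auto)
    finally show ?case unfolding eq using C elim by linarith
  qed
qed

lemma partb:
  assumes x: "x \<in> D" and r: "0 < r"
  shows "RI (A x) 0 r (T r x - x)"
proof -
  define Z where "Z = Itg x 0 r"
  have Z: "RI x 0 r Z" unfolding Z_def using Itg_RI r by simp
  have eqh: "Itg (q h x) 0 r = sm (rsc (1/h)) (T h Z - Z)" if h: "0 < h" for h
  proof -
    have "RI (T h x) 0 r (T h Z)" using RI_T[OF _ _ Z] h by simp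
    then have "RI (T h x - x) 0 r (T h Z - Z)" using RI_diff[OF _ _ Z] by simp
    then have "RI (q h x) 0 r (sm (rsc (1/h)) (T h Z - Z))" unfolding q_def using RI_scale by simp
    then show ?thesis using Itg_eq r by simp
  qed
  have l1: "rn_tendsto M nr (\<lambda>h. Itg (q h x) 0 r) (T r x - x) (at_right 0)"
  proof (rule rn_tendsto_cong[OF key[OF r, of x]])
    show "eventually (\<lambda>h. sm (rsc (1/h)) (T h (Itg x 0 r) - Itg x 0 r) = Itg (q h x) 0 r) (at_right 0)"
      using ev_pos by eventually_elim (simp add: eqh Z_def)
  qed
  have "Itg (A x) 0 r = T r x - x"
    using rn_tendsto_unique[OF trivial_limit_at_right_real int_lim[OF x r] l1] .
  then show ?thesis using Itg_RI[of 0 r "A x"] r by simp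
qed

end

lemma rn_int_cong:
  assumes fg: "\<forall>t\<in>{a..b}. f t = g t" and I: "rn_has_integral M sm nr f a b J"
  shows "rn_has_integral M sm nr g a b J"
  unfolding rn_has_integral_def
proof (intro allI impI)
  fix e lam :: real assume e: "e > 0" and l: "lam > 0"
  obtain d where d: "d > 0" and H: "\<forall>n s \<tau>. (s 0 = a \<and> s n = b \<and>
         (\<forall>i<n. s i < s (Suc i) \<and> s i \<le> \<tau> i \<and> \<tau> i \<le> s (Suc i) \<and> s (Suc i) - s i < d))
        \<longrightarrow> measure M {w\<in>space M.
              e \<le> nr ((\<Sum>i<n. sm (rsc (s (Suc i) - s i)) (f (\<tau> i))) - J) w} < lam"
    using I e l unfolding rn_has_integral_def by blast
  show "\<exists>\<delta>>0. \<forall>n s \<tau>. (s 0 = a \<and> s n = b \<and>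
         (\<forall>i<n. s i < s (Suc i) \<and> s i \<le> \<tau> i \<and> \<tau> i \<le> s (Suc i) \<and> s (Suc i) - s i < \<delta>))
        \<longrightarrow> measure M {w\<in>space M.
              e \<le> nr ((\<Sum>i<n. sm (rsc (s (Suc i) - s i)) (g (\<tau> i))) - J) w} < lam"
  proof (intro exI[of _ d] conjI allI impI)
    show "d > 0" by (rule d)
    fix n s \<tau> assume c: "s 0 = a \<and> s n = b \<and>
         (\<forall>i<n. s i < s (Suc i) \<and> s i \<le> \<tau> i \<and> \<tau> i \<le> s (Suc i) \<and> s (Suc i) - s i < d)"
    then have P: "part a b n s \<tau>" unfolding part_def by auto
    have "(\<Sum>i<n. sm (rsc (s (Suc i) - s i)) (g (\<tau> i))) = (\<Sum>i<n. sm (rsc (s (Suc i) - s i)) (f (\<tau> i)))"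
      using part_tau[OF P] fg by (intro sum.cong refl) auto
    then show "measure M {w\<in>space M.
              e \<le> nr ((\<Sum>i<n. sm (rsc (s (Suc i) - s i)) (g (\<tau> i))) - J) w} < lam"
      using H c by simp
  qed
qed

theorem theorem3p9:
  fixes M :: "'w measure"
    and sm :: "('w \<Rightarrow> 'k::real_normed_field) \<Rightarrow> 'a::ab_group_add \<Rightarrow> 'a"
    and nr :: "'a \<Rightarrow> 'w \<Rightarrow> real"
    and T :: "real \<Rightarrow> 'a \<Rightarrow> 'a"
    and A :: "'a \<Rightarrow> 'a"
  assumes "rn_module M sm nr"
    and "rn_complete M nr"
    and "C0_semigroup M sm nr T"
    and "as_bounded M nr T"
    and "is_generator M sm nr T A"
  shows "rn_dense M nr (gen_domain M sm nr T)
    \<and> submodule M sm (gen_domain M sm nr T)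
    \<and> module_hom_on M sm (gen_domain M sm nr T) A
    \<and> (\<forall>x\<in>gen_domain M sm nr T. \<forall>t\<ge>0.
          T t x \<in> gen_domain M sm nr T
          \<and> rn_has_deriv M sm nr (\<lambda>s. T s x) (A (T t x)) t {0..}
          \<and> A (T t x) = T t (A x))
    \<and> (\<forall>x\<in>gen_domain M sm nr T. \<forall>r>0.
          rn_has_integral M sm nr (\<lambda>s. T s (A x)) 0 r (T r x - x)
          \<and> rn_has_integral M sm nr (\<lambda>s. A (T s x)) 0 r (T r x - x))"
proof -
  interpret sg M sm nr T A
    using assms by (unfold_locales) auto
  have s: "submodule M sm D"
    unfolding submodule_def using D_zero D_add(1) D_sm(1) by blast
  have m: "module_hom_on M sm D A"
    unfolding module_hom_on_def using D_add(2) D_sm(2) by blast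
  have a: "\<forall>x\<in>D. \<forall>t\<ge>0. T t x \<in> D \<and> rn_has_deriv M sm nr (\<lambda>s. T s x) (A (T t x)) t {0..} \<and> A (T t x) = T t (A x)"
    using D_T deriv by blast
  have b: "\<forall>x\<in>D. \<forall>r>0. rn_has_integral M sm nr (\<lambda>s. T s (A x)) 0 r (T r x - x)
          \<and> rn_has_integral M sm nr (\<lambda>s. A (T s x)) 0 r (T r x - x)"
  proof (intro ballI allI impI conjI)
    fix x r assume x: "x \<in> D" and r: "(0::real) < r"
    show I: "rn_has_integral M sm nr (\<lambda>s. T s (A x)) 0 r (T r x - x)" by (rule partb[OF x r])
    show "rn_has_integral M sm nr (\<lambda>s. A (T s x)) 0 r (T r x - x)"
      by (rule rn_int_cong[OF _ I]) (use D_T(2)[OF x] in auto)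
  qed
  show ?thesis using density s m a b by blast
qed


end
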